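(* Let $p$ be a prime and let $A$ be a Henselian valuation ring which is not a field, with field of fractions $K$ of characteristic $0$, maximal ideal $\mathfrak{m}_A$, residue field $k$ of characteristic $p$ and valuation $v_A$. Assume $K$ contains a primitive $p$-th root of unity $\zeta$; put $\mathfrak{z}=\zeta-1$, $e'=v_A(p)/(p-1)$. Let $L/K$ be a non-trivial Kummer extension of degree $p$. Then any $h\in A$ generating $L/K$ that satisfies one of the following properties is best (where $s,t\in\mathfrak{m}_A$, $u,c\in A^\times$, $\bar u\notin k^p$): (i) $p\nmid v_A(h)$; (ii) $h=u$; (iii) $h=1+ct$ with $0<v_A(t)<e'p$, $p\nmid v_A(t)$; (iv) $h=1+us^p$ with $0<v_A(s)<e'$; (v) $h=1+c\mathfrak{z}^p$ with $\bar c\notin\{x^p-x\mid x\in k\}$.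
   Context: An element $h\in K$ generates $L/K$ if $L=K(\alpha)$ with $\alpha^p=h$; any two generators satisfy $h'=h^ig^p$ with $g\in K^\times$, $1\le i\le p-1$. A generator $h$ is best if $v_A(h-1)=\sup_{g\in K^\times,\,1\le i\le p-1}v_A(h^ig^p-1)$. *)

theory Defs
  imports "HOL-Algebra.Algebra" "HOL-Library.Extended"
begin

text \<open>Setting: L is a field (HOL-Algebra record), K \<subseteq> carrier L a subfield,
  and v a (Krull) valuation on K with values in an ordered abelian group 'g,
  extended by a top element Pinf (= infinity) for v(0).\<close>

fun nsm :: "nat \<Rightarrow> 'g::monoid_add \<Rightarrow> 'g" where
  "nsm 0 x = 0"
| "nsm (Suc n) x = x + nsm n x"

definition valuation ::
  "('a, 'b) ring_scheme \<Rightarrow> 'a set \<Rightarrow> ('a \<Rightarrow> 'g::linordered_ab_group_add extended) \<Rightarrow> bool" where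
  "valuation L K v \<longleftrightarrow>
     (\<forall>x\<in>K. v x \<noteq> Minf) \<and>
     (\<forall>x\<in>K. v x = Pinf \<longleftrightarrow> x = \<zero>\<^bsub>L\<^esub>) \<and>
     (\<forall>x\<in>K. \<forall>y\<in>K. v (x \<otimes>\<^bsub>L\<^esub> y) = v x + v y) \<and>
     (\<forall>x\<in>K. \<forall>y\<in>K. min (v x) (v y) \<le> v (x \<oplus>\<^bsub>L\<^esub> y))"

definition val_ring :: "'a set \<Rightarrow> ('a \<Rightarrow> 'g::linordered_ab_group_add extended) \<Rightarrow> 'a set" where
  "val_ring K v = {x \<in> K. 0 \<le> v x}"

definition val_ideal :: "'a set \<Rightarrow> ('a \<Rightarrow> 'g::linordered_ab_group_add extended) \<Rightarrow> 'a set" where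
  "val_ideal K v = {x \<in> K. 0 < v x}"

definition val_units :: "'a set \<Rightarrow> ('a \<Rightarrow> 'g::linordered_ab_group_add extended) \<Rightarrow> 'a set" where
  "val_units K v = {x \<in> K. v x = 0}"

text \<open>Formal derivative of a polynomial in HOL-Algebra list representation
  (coefficients listed from the leading one down to the constant one).\<close>
definition formal_deriv :: "('a, 'b) ring_scheme \<Rightarrow> 'a list \<Rightarrow> 'a list" where
  "formal_deriv L f = map (\<lambda>j. add_pow L (length f - 1 - j) (f ! j)) [0..<length f - 1]"

definition henselian ::
  "('a, 'b) ring_scheme \<Rightarrow> 'a set \<Rightarrow> ('a \<Rightarrow> 'g::linordered_ab_group_add extended) \<Rightarrow> bool" where
  "henselian L K v \<longleftrightarrow>
     (\<forall>f a. f \<noteq> [] \<and> set f \<subseteq> val_ring K v \<and> hd f = \<one>\<^bsub>L\<^esub> \<and> a \<in> val_ring K v \<and>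
        ring.eval L f a \<in> val_ideal K v \<and>
        ring.eval L (formal_deriv L f) a \<in> val_units K v
      \<longrightarrow> (\<exists>b \<in> val_ring K v. ring.eval L f b = \<zero>\<^bsub>L\<^esub> \<and> b \<ominus>\<^bsub>L\<^esub> a \<in> val_ideal K v))"

definition val_p_divides ::
  "('a, 'b) ring_scheme \<Rightarrow> 'a set \<Rightarrow> ('a \<Rightarrow> 'g::linordered_ab_group_add extended) \<Rightarrow> nat \<Rightarrow> 'a \<Rightarrow> bool" where
  "val_p_divides L K v p x \<longleftrightarrow>
     (\<exists>g \<in> K - {\<zero>\<^bsub>L\<^esub>}. \<exists>\<gamma>. v g = Fin \<gamma> \<and> v x = Fin (nsm p \<gamma>))"

definition primitive_root :: "('a, 'b) ring_scheme \<Rightarrow> nat \<Rightarrow> 'a \<Rightarrow> bool" where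
  "primitive_root L p \<zeta> \<longleftrightarrow>
     \<zeta> [^]\<^bsub>L\<^esub> p = \<one>\<^bsub>L\<^esub> \<and> (\<forall>j::nat. 0 < j \<and> j < p \<longrightarrow> \<zeta> [^]\<^bsub>L\<^esub> j \<noteq> \<one>\<^bsub>L\<^esub>)"

definition generates :: "('a, 'b) ring_scheme \<Rightarrow> 'a set \<Rightarrow> nat \<Rightarrow> 'a \<Rightarrow> bool" where
  "generates L K p h \<longleftrightarrow> h \<in> K \<and>
     (\<exists>\<alpha> \<in> carrier L. \<alpha> [^]\<^bsub>L\<^esub> p = h \<and> generate_field L (insert \<alpha> K) = carrier L)"

definition best_gen_values ::
  "('a, 'b) ring_scheme \<Rightarrow> 'a set \<Rightarrow> ('a \<Rightarrow> 'g::linordered_ab_group_add extended) \<Rightarrow> nat \<Rightarrow> 'a \<Rightarrow> 'g extended set" where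
  "best_gen_values L K v p h =
     {v ((h [^]\<^bsub>L\<^esub> i) \<otimes>\<^bsub>L\<^esub> (g [^]\<^bsub>L\<^esub> p) \<ominus>\<^bsub>L\<^esub> \<one>\<^bsub>L\<^esub>) | g i.
        g \<in> K - {\<zero>\<^bsub>L\<^esub>} \<and> 1 \<le> i \<and> i \<le> p - 1}"

definition is_best ::
  "('a, 'b) ring_scheme \<Rightarrow> 'a set \<Rightarrow> ('a \<Rightarrow> 'g::linordered_ab_group_add extended) \<Rightarrow> nat \<Rightarrow> 'a \<Rightarrow> bool" where
  "is_best L K v p h \<longleftrightarrow>
     (let S = best_gen_values L K v p h; a = v (h \<ominus>\<^bsub>L\<^esub> \<one>\<^bsub>L\<^esub>) in
        (\<forall>x \<in> S. x \<le> a) \<and> (\<forall>b. (\<forall>x \<in> S. x \<le> b) \<longrightarrow> a \<le> b))"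

end

theory Submission
  imports Defs
begin


lemma nsm_add: "nsm (a + b) x = nsm a x + nsm b (x::'g::monoid_add)"
  by (induction a) (simp_all add: add.assoc)

lemma nsm_Fin: "nsm n (Fin a) = Fin (nsm n a)"
  by (induction n) (simp_all add: zero_extended_def)

lemma nsm_Suc': "nsm (Suc n) x = nsm n x + (x::'g::monoid_add)"
  using nsm_add[of n 1 x] by simp

lemma nsm_mult: "nsm (a * b) x = nsm a (nsm b (x::'g::monoid_add))"
  by (induction a) (simp_all add: nsm_add)

lemma nsm_distrib: "nsm n (x + y) = nsm n x + nsm n (y::'g::comm_monoid_add)"
  by (induction n) (simp_all add: algebra_simps)

lemma nsm_neg: "nsm n (- x) = - nsm n (x::'g::ab_group_add)"
  by (induction n) (simp_all add: algebra_simps)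

lemma nsm_zero: "nsm n (0::'g::monoid_add) = 0"
  by (induction n) simp_all

lemma nsm_mono: "a \<le> b \<Longrightarrow> nsm n a \<le> nsm n (b::'g::ordered_ab_group_add)"
  by (induction n) (simp_all add: add_mono)

lemma nsm_strict_mono: "a < b \<Longrightarrow> 0 < n \<Longrightarrow> nsm n a < nsm n (b::'g::ordered_ab_group_add)"
proof (induction n)
  case 0 then show ?case by simp
next
  case (Suc n)
  then show ?case
    by (cases "n = 0") (simp_all add: add_less_le_mono less_imp_le nsm_mono)
qed

lemma nsm_less_iff: "0 < n \<Longrightarrow> nsm n a < nsm n b \<longleftrightarrow> a < (b::'g::linordered_ab_group_add)"
  by (metis nsm_strict_mono nsm_mono not_le)

lemma nsm_le_iff: "0 < n \<Longrightarrow> nsm n a \<le> nsm n b \<longleftrightarrow> a \<le> (b::'g::linordered_ab_group_add)"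
  by (metis nsm_strict_mono nsm_mono not_le)

lemma nsm_inj: "0 < n \<Longrightarrow> nsm n a = nsm n b \<longleftrightarrow> a = (b::'g::linordered_ab_group_add)"
  by (metis nsm_le_iff order_antisym order_refl)

lemma nsm_pos: "0 < n \<Longrightarrow> 0 < nsm n a \<longleftrightarrow> 0 < (a::'g::linordered_ab_group_add)"
  using nsm_less_iff[of n 0 a] by (simp add: nsm_zero)

lemma nsm_nonneg: "0 \<le> nsm n a \<longleftrightarrow> 0 \<le> (a::'g::linordered_ab_group_add) \<or> n = 0"
  using nsm_le_iff[of n 0 a] by (cases "n = 0") (simp_all add: nsm_zero)

lemma nsm_eq0: "0 < n \<Longrightarrow> nsm n a = 0 \<longleftrightarrow> a = (0::'g::linordered_ab_group_add)"
  using nsm_inj[of n a 0] by (simp add: nsm_zero)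

lemma nsm_1: "nsm 1 x = (x::'g::monoid_add)" by simp

lemma Fin_add_less: "Fin (c::'g::linordered_ab_group_add) + a < Fin c + b \<longleftrightarrow> a < b"
  by (cases a; cases b) simp_all

lemma Fin_add_le: "Fin (c::'g::linordered_ab_group_add) + a \<le> Fin c + b \<longleftrightarrow> a \<le> b"
  by (cases a; cases b) simp_all

locale vf = field L for L :: "('a, 'b) ring_scheme" (structure) +
  fixes K :: "'a set" and v :: "'a \<Rightarrow> 'g::linordered_ab_group_add extended"
  assumes Ksf: "subfield K L" and val: "valuation L K v"
begin

abbreviation "A \<equiv> val_ring K v"
abbreviation "M \<equiv> val_ideal K v"

lemma Ksub: "K \<subseteq> carrier L" using subfieldE(3)[OF Ksf] .
lemma Kc[simp]: "x \<in> K \<Longrightarrow> x \<in> carrier L" using Ksub by auto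
lemma K0[simp]: "\<zero> \<in> K" using subringE(2)[OF subfieldE(1)[OF Ksf]] .
lemma K1[simp]: "\<one> \<in> K" using subringE(3)[OF subfieldE(1)[OF Ksf]] .
lemma Kneg[simp]: "x \<in> K \<Longrightarrow> \<ominus> x \<in> K" using subringE(5)[OF subfieldE(1)[OF Ksf]] .
lemma Kmult[simp]: "x \<in> K \<Longrightarrow> y \<in> K \<Longrightarrow> x \<otimes> y \<in> K" using subringE(6)[OF subfieldE(1)[OF Ksf]] .
lemma Kadd[simp]: "x \<in> K \<Longrightarrow> y \<in> K \<Longrightarrow> x \<oplus> y \<in> K" using subringE(7)[OF subfieldE(1)[OF Ksf]] .
lemma Kminus[simp]: "x \<in> K \<Longrightarrow> y \<in> K \<Longrightarrow> x \<ominus> y \<in> K" by (simp add: a_minus_def)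
lemma Kpow[simp]: "x \<in> K \<Longrightarrow> x [^] (n::nat) \<in> K" by (induction n) simp_all
lemma Kinv: "x \<in> K \<Longrightarrow> x \<noteq> \<zero> \<Longrightarrow> inv x \<in> K" using subfield_m_inv(1)[OF Ksf] by auto
lemma Kinv_r: "x \<in> K \<Longrightarrow> x \<noteq> \<zero> \<Longrightarrow> x \<otimes> inv x = \<one>" using subfield_m_inv(2)[OF Ksf] by auto
lemma Knat[simp]: "[(n::nat)] \<cdot> \<one> \<in> K" by (induction n) (simp_all add: add.nat_pow_Suc)

lemma vM: "x \<in> K \<Longrightarrow> v x \<noteq> Minf" using val unfolding valuation_def by auto
lemma vP: "x \<in> K \<Longrightarrow> v x = Pinf \<longleftrightarrow> x = \<zero>" using val unfolding valuation_def by auto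
lemma vmult: "x \<in> K \<Longrightarrow> y \<in> K \<Longrightarrow> v (x \<otimes> y) = v x + v y" using val unfolding valuation_def by auto
lemma vadd: "x \<in> K \<Longrightarrow> y \<in> K \<Longrightarrow> min (v x) (v y) \<le> v (x \<oplus> y)" using val unfolding valuation_def by auto
lemma v0[simp]: "v \<zero> = Pinf" using vP[of \<zero>] by simp

lemma vFin: "x \<in> K \<Longrightarrow> x \<noteq> \<zero> \<Longrightarrow> \<exists>a. v x = Fin a"
  using vM vP by (cases "v x") auto

lemma v1[simp]: "v \<one> = 0"
proof -
  have "v \<one> = v \<one> + v \<one>" using vmult[of \<one> \<one>] by simp
  moreover obtain a where "v \<one> = Fin a" using vFin[of \<one>] by auto
  ultimately show ?thesis by (simp add: zero_extended_def)
qed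

lemma vneg1: "v (\<ominus> \<one>) = 0"
proof -
  have "\<ominus> \<one> \<otimes> \<ominus> \<one> = \<one>" by (simp add: l_minus)
  then have "v \<one> = v (\<ominus> \<one>) + v (\<ominus> \<one>)" using vmult[of "\<ominus> \<one>" "\<ominus> \<one>"] by simp
  moreover obtain a where "v (\<ominus> \<one>) = Fin a" using vFin[of "\<ominus> \<one>"] by auto
  ultimately show ?thesis by (simp add: zero_extended_def)
qed

lemma vneg[simp]: "x \<in> K \<Longrightarrow> v (\<ominus> x) = v x"
proof -
  assume x: "x \<in> K"
  have "\<ominus> x = \<ominus> \<one> \<otimes> x" using x by (simp add: l_minus)
  then show ?thesis using vmult[of "\<ominus> \<one>" x] x vneg1 by simp
qed

lemma vsub: "x \<in> K \<Longrightarrow> y \<in> K \<Longrightarrow> min (v x) (v y) \<le> v (x \<ominus> y)"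
  using vadd[of x "\<ominus> y"] by (simp add: a_minus_def)

lemma vsub_comm: "x \<in> K \<Longrightarrow> y \<in> K \<Longrightarrow> v (x \<ominus> y) = v (y \<ominus> x)"
proof -
  assume "x \<in> K" "y \<in> K"
  moreover have "\<ominus> (y \<ominus> x) = x \<ominus> y" using calculation by (simp add: a_minus_def minus_add minus_minus add.m_comm)
  ultimately show ?thesis using vneg[of "y \<ominus> x"] by simp
qed

lemma vstrict: assumes x: "x \<in> K" and y: "y \<in> K" and lt: "v x < v y"
  shows "v (x \<oplus> y) = v x"
proof -
  have 1: "min (v x) (v y) \<le> v (x \<oplus> y)" using vadd x y by blast
  have "x = (x \<oplus> y) \<ominus> y" using x y by (simp add: a_minus_def add.m_assoc r_neg)
  then have "min (v (x \<oplus> y)) (v y) \<le> v x" using vsub[of "x \<oplus> y" y] x y by simp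
  then show ?thesis using 1 lt by (auto simp: min_def split: if_splits)
qed

lemma vstrict': "x \<in> K \<Longrightarrow> y \<in> K \<Longrightarrow> v y < v x \<Longrightarrow> v (x \<oplus> y) = v y"
  using vstrict[of y x] by (simp add: add.m_comm)

lemma vpow: "x \<in> K \<Longrightarrow> v (x [^] (n::nat)) = nsm n (v x)"
  by (induction n) (simp_all add: vmult add.commute)

lemma vinv: assumes "x \<in> K" "x \<noteq> \<zero>" "v x = Fin a" shows "v (inv x) = Fin (- a)"
proof -
  have "v x + v (inv x) = 0" using vmult[of x "inv x"] Kinv_r[OF assms(1,2)] Kinv[OF assms(1,2)] assms by simp
  moreover obtain b where "v (inv x) = Fin b" using vFin[of "inv x"] Kinv[OF assms(1,2)]
    by (metis Kinv_r assms(1,2) r_null Kc zero_not_one)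
  ultimately show ?thesis using assms(3) by (simp add: zero_extended_def eq_neg_iff_add_eq_0 add.commute)
qed

end


primrec rs :: "('a, 'b) ring_scheme \<Rightarrow> (nat \<Rightarrow> 'a) \<Rightarrow> nat \<Rightarrow> 'a" where
  "rs R f 0 = \<zero>\<^bsub>R\<^esub>"
| "rs R f (Suc n) = rs R f n \<oplus>\<^bsub>R\<^esub> f n"

context cring begin

abbreviation nl :: "nat \<Rightarrow> 'a" where "nl n \<equiv> add_pow R n \<one>"

lemma nl_closed[simp]: "nl n \<in> carrier R" by simp

lemma nl_Suc: "nl (Suc n) = nl n \<oplus> \<one>" by (simp add: add.nat_pow_Suc)

lemma nl_add: "nl (a + b) = nl a \<oplus> nl b" by (simp add: add.nat_pow_mult)

lemma nl_mult: "nl (a * b) = nl a \<otimes> nl b"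
proof (induction a)
  case 0 then show ?case by simp
next
  case (Suc a)
  have "nl (Suc a * b) = nl (a * b) \<oplus> nl b" by (simp only: mult_Suc nl_add) (simp add: a_comm)
  also have "\<dots> = nl a \<otimes> nl b \<oplus> nl b" using Suc by simp
  also have "\<dots> = nl (Suc a) \<otimes> nl b" by (simp add: nl_Suc l_distr)
  finally show ?case .
qed

lemma nl_pow: "nl a [^] (n::nat) = nl (a ^ n)"
  by (induction n) (simp_all add: nl_mult m_comm)

lemma nl_0[simp]: "nl 0 = \<zero>" by simp
lemma nl_1[simp]: "nl 1 = \<one>" by simp

lemma rs_closed[simp]: "(\<And>k. f k \<in> carrier R) \<Longrightarrow> rs R f n \<in> carrier R"
  by (induction n) simp_all

lemma rs_in: assumes "\<zero> \<in> S" "\<And>x y. x \<in> S \<Longrightarrow> y \<in> S \<Longrightarrow> x \<oplus> y \<in> S" "\<And>k. k < n \<Longrightarrow> f k \<in> S"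
  shows "rs R f n \<in> S"
  using assms(3) by (induction n) (simp_all add: assms(1,2))

lemma rs_cong: "(\<And>k. k < n \<Longrightarrow> f k = g k) \<Longrightarrow> rs R f n = rs R g n"
  by (induction n) simp_all

lemma rs_shift: "(\<And>k. f k \<in> carrier R) \<Longrightarrow> rs R f (Suc n) = f 0 \<oplus> rs R (\<lambda>k. f (Suc k)) n"
proof (induction n)
  case 0 then show ?case by simp
next
  case (Suc n)
  have "rs R f (Suc (Suc n)) = (f 0 \<oplus> rs R (\<lambda>k. f (Suc k)) n) \<oplus> f (Suc n)"
    using Suc by simp
  also have "\<dots> = f 0 \<oplus> rs R (\<lambda>k. f (Suc k)) (Suc n)"
    using Suc.prems by (simp add: add.m_assoc)
  finally show ?case .
qed

lemma rs_mult: "c \<in> carrier R \<Longrightarrow> (\<And>k. f k \<in> carrier R) \<Longrightarrow> c \<otimes> rs R f n = rs R (\<lambda>k. c \<otimes> f k) n"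
  by (induction n) (simp_all add: r_distr)

lemma rs_mult_r: "c \<in> carrier R \<Longrightarrow> (\<And>k. f k \<in> carrier R) \<Longrightarrow> rs R f n \<otimes> c = rs R (\<lambda>k. f k \<otimes> c) n"
  by (induction n) (simp_all add: l_distr)

lemma rs_add: "(\<And>k. f k \<in> carrier R) \<Longrightarrow> (\<And>k. g k \<in> carrier R) \<Longrightarrow>
    rs R (\<lambda>k. f k \<oplus> g k) n = rs R f n \<oplus> rs R g n"
proof (induction n)
  case 0 then show ?case by simp
next
  case (Suc n)
  then show ?case by (simp add: a_ac)
qed

lemma binomial:
  assumes x: "x \<in> carrier R"
  shows "(\<one> \<oplus> x) [^] n = rs R (\<lambda>k. nl (n choose k) \<otimes> x [^] k) (Suc n)"
proof (induction n)
  case 0 then show ?case by simp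
next
  case (Suc n)
  define b where "b = (\<lambda>k. nl (n choose k) \<otimes> x [^] k)"
  have bc: "\<And>k. b k \<in> carrier R" unfolding b_def using x by simp
  define S where "S = rs R b (Suc n)"
  define T where "T = rs R (\<lambda>k. b (Suc k)) n"
  have Sc: "S \<in> carrier R" unfolding S_def using bc by simp
  have Tc: "T \<in> carrier R" unfolding T_def using bc by simp
  have S: "S = \<one> \<oplus> T" unfolding S_def T_def using rs_shift[of b n, OF bc] by (simp add: b_def)
  have "rs R (\<lambda>k. b (Suc k)) (Suc n) = T \<oplus> b (Suc n)" unfolding T_def by simp
  also have "b (Suc n) = \<zero>" unfolding b_def using x by (simp add: binomial_eq_0)
  finally have T2: "rs R (\<lambda>k. b (Suc k)) (Suc n) = T" using Tc by simp
  have "rs R (\<lambda>k. nl (Suc n choose k) \<otimes> x [^] k) (Suc (Suc n))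
      = \<one> \<oplus> rs R (\<lambda>k. nl (Suc n choose Suc k) \<otimes> x [^] Suc k) (Suc n)"
    using rs_shift[of "\<lambda>k. nl (Suc n choose k) \<otimes> x [^] k" "Suc n"] x by simp
  also have "rs R (\<lambda>k. nl (Suc n choose Suc k) \<otimes> x [^] Suc k) (Suc n)
      = rs R (\<lambda>k. b k \<otimes> x \<oplus> b (Suc k)) (Suc n)"
  proof (rule rs_cong)
    fix k
    have "nl (Suc n choose Suc k) \<otimes> x [^] Suc k = (nl (n choose k) \<oplus> nl (n choose Suc k)) \<otimes> (x [^] k \<otimes> x)"
      by (simp add: nl_add)
    also have "\<dots> = b k \<otimes> x \<oplus> b (Suc k)"
      unfolding b_def using x by (simp add: l_distr m_assoc)
    finally show "nl (Suc n choose Suc k) \<otimes> x [^] Suc k = b k \<otimes> x \<oplus> b (Suc k)" .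
  qed
  also have "\<dots> = S \<otimes> x \<oplus> T"
    unfolding S_def using rs_add[of "\<lambda>k. b k \<otimes> x" "\<lambda>k. b (Suc k)" "Suc n"] bc x rs_mult_r[of x b "Suc n"] T2
    by simp
  finally have R: "rs R (\<lambda>k. nl (Suc n choose k) \<otimes> x [^] k) (Suc (Suc n)) = \<one> \<oplus> (S \<otimes> x \<oplus> T)" .
  have "(\<one> \<oplus> x) [^] Suc n = S \<otimes> (\<one> \<oplus> x)" using Suc by (simp add: S_def b_def)
  also have "\<dots> = \<one> \<oplus> (S \<otimes> x \<oplus> T)" using S Sc Tc x by algebra
  finally show ?case using R by simp
qed

end


context vf begin

lemma ext_nonneg: "0 \<le> a \<Longrightarrow> 0 \<le> b \<Longrightarrow> 0 \<le> a + (b::'g extended)"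
  by (cases a; cases b) (simp_all add: zero_extended_def)
lemma ext_pos: "0 \<le> a \<Longrightarrow> 0 < b \<Longrightarrow> 0 < a + (b::'g extended)"
  by (cases a; cases b) (simp_all add: zero_extended_def add_nonneg_pos)
lemma inA: "x \<in> A \<longleftrightarrow> x \<in> K \<and> 0 \<le> v x" by (simp add: val_ring_def)
lemma inM: "x \<in> M \<longleftrightarrow> x \<in> K \<and> 0 < v x" by (simp add: val_ideal_def)
lemma AK: "x \<in> A \<Longrightarrow> x \<in> K" by (simp add: inA)
lemma MK: "x \<in> M \<Longrightarrow> x \<in> K" by (simp add: inM)
lemma MA: "x \<in> M \<Longrightarrow> x \<in> A" by (simp add: inM inA less_imp_le)
lemma A1[simp]: "\<one> \<in> A" by (simp add: inA)
lemma A0[simp]: "\<zero> \<in> A" by (simp add: inA)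
lemma M0[simp]: "\<zero> \<in> M" by (simp add: inM zero_extended_def)
lemma one_notM: "\<one> \<notin> M" by (simp add: inM)

lemma A_add: "x \<in> A \<Longrightarrow> y \<in> A \<Longrightarrow> x \<oplus> y \<in> A"
  using vadd[of x y] by (auto simp: inA min_def split: if_splits intro: order_trans)
lemma A_neg: "x \<in> A \<Longrightarrow> \<ominus> x \<in> A" by (simp add: inA)
lemma A_minus: "x \<in> A \<Longrightarrow> y \<in> A \<Longrightarrow> x \<ominus> y \<in> A" by (simp add: a_minus_def A_add A_neg)
lemma A_mult: "x \<in> A \<Longrightarrow> y \<in> A \<Longrightarrow> x \<otimes> y \<in> A"
  using vmult[of x y] by (simp add: inA ext_nonneg)
lemma A_pow: "x \<in> A \<Longrightarrow> x [^] (n::nat) \<in> A" by (induction n) (simp_all add: A_mult)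
lemma A_nl[simp]: "nl n \<in> A" by (induction n) (simp_all add: nl_Suc A_add)

lemma M_add: "x \<in> M \<Longrightarrow> y \<in> M \<Longrightarrow> x \<oplus> y \<in> M"
  using vadd[of x y] by (auto simp: inM min_def split: if_splits intro: less_le_trans)
lemma M_neg: "x \<in> M \<Longrightarrow> \<ominus> x \<in> M" by (simp add: inM)
lemma M_minus: "x \<in> M \<Longrightarrow> y \<in> M \<Longrightarrow> x \<ominus> y \<in> M" by (simp add: a_minus_def M_add M_neg)
lemma M_mult: "a \<in> A \<Longrightarrow> x \<in> M \<Longrightarrow> a \<otimes> x \<in> M"
  using vmult[of a x] by (simp add: inM inA ext_pos)
lemma M_mult': "x \<in> M \<Longrightarrow> a \<in> A \<Longrightarrow> x \<otimes> a \<in> M"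
  using M_mult[of a x] by (simp add: m_comm inM inA)
lemma M_pow: "x \<in> M \<Longrightarrow> 0 < n \<Longrightarrow> x [^] (n::nat) \<in> M"
proof (induction n)
  case 0 then show ?case by simp
next
  case (Suc n) then show ?case
    by (cases "n = 0") (simp_all add: M_mult MA)
qed

lemma vFinA: "x \<in> K \<Longrightarrow> x \<noteq> \<zero> \<Longrightarrow> (\<exists>a. v x = Fin a)" by (rule vFin)

lemma M_root: assumes x: "x \<in> A" and n: "0 < n" and xn: "x [^] (n::nat) \<in> M" shows "x \<in> M"
proof (cases "x = \<zero>")
  case True then show ?thesis by simp
next
  case False
  then obtain a where a: "v x = Fin a" using vFin[of x] x by (auto simp: inA)
  have "0 < nsm n (v x)" using xn vpow[of x n] x by (simp add: inM inA)
  then have "0 < a" using a n by (simp add: nsm_Fin nsm_pos zero_extended_def)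
  then show ?thesis using x a by (simp add: inM inA zero_extended_def)
qed

lemma unit_of: "x \<in> A \<Longrightarrow> x \<notin> M \<Longrightarrow> v x = 0"
  by (auto simp: inA inM)

lemma one_plus_M: "m \<in> M \<Longrightarrow> v (\<one> \<oplus> m) = 0"
  using vstrict[of \<one> m] by (simp add: inM)

lemma vge_mult: "s \<in> K \<Longrightarrow> a \<in> A \<Longrightarrow> v s \<le> v (s \<otimes> a)"
  using vmult[of s a] add_left_mono[of 0 "v a" "v s"] by (simp add: inA)

lemma vgt_mult: assumes "s \<in> K" "s \<noteq> \<zero>" "m \<in> M" shows "v s < v (s \<otimes> m)"
proof -
  obtain a where a: "v s = Fin a" using vFin assms by blast
  have "Fin a + 0 < Fin a + v m" using assms(3) Fin_add_less[of a 0 "v m"] by (simp add: inM)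
  then show ?thesis using vmult[of s m] assms a by (simp add: inM)
qed

lemma L1: assumes x: "x \<in> A"
  shows "\<exists>w\<in>A. (\<one> \<oplus> x) [^] (n::nat) = \<one> \<oplus> nl n \<otimes> x \<oplus> x [^] (2::nat) \<otimes> w"
proof (induction n)
  case 0
  have "\<one> = \<one> \<oplus> nl 0 \<otimes> x \<oplus> x [^] (2::nat) \<otimes> \<zero>" using x by (simp add: AK)
  then show ?case by (intro bexI[of _ \<zero>]) simp_all
next
  case (Suc n)
  then obtain w where w: "w \<in> A" "(\<one> \<oplus> x) [^] n = \<one> \<oplus> nl n \<otimes> x \<oplus> x [^] (2::nat) \<otimes> w" by blast
  have xc: "x \<in> carrier L" and wc: "w \<in> carrier L" using x w by (simp_all add: AK)
  have "(\<one> \<oplus> x) [^] Suc n = (\<one> \<oplus> nl n \<otimes> x \<oplus> x [^] (2::nat) \<otimes> w) \<otimes> (\<one> \<oplus> x)" using w by simp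
  also have "\<dots> = \<one> \<oplus> (nl n \<oplus> \<one>) \<otimes> x \<oplus> x [^] (2::nat) \<otimes> (w \<oplus> nl n \<oplus> x \<otimes> w)"
  proof -
    have pw: "x [^] (2::nat) = x \<otimes> x" using xc by (simp add: numeral_2_eq_2)
    have nc: "nl n \<in> carrier L" by simp
    have "(\<one> \<oplus> nl n \<otimes> x \<oplus> (x \<otimes> x) \<otimes> w) \<otimes> (\<one> \<oplus> x) = \<one> \<oplus> (nl n \<oplus> \<one>) \<otimes> x \<oplus> (x \<otimes> x) \<otimes> (w \<oplus> nl n \<oplus> x \<otimes> w)"
      using xc wc nc by algebra
    then show ?thesis by (simp only: pw)
  qed
  finally show ?case using w x by (intro bexI[of _ "w \<oplus> nl n \<oplus> x \<otimes> w"]) (simp_all add: nl_Suc A_add A_mult)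
qed

end

locale vfp = vf +
  fixes p :: nat
  assumes pprime: "Factorial_Ring.prime p"
    and char0: "\<forall>n::nat. 0 < n \<longrightarrow> nl n \<noteq> \<zero>"
    and res: "\<forall>n::nat. nl n \<in> M \<longleftrightarrow> p dvd n"
begin

lemma p2: "2 \<le> p" using pprime prime_ge_2_nat by blast

lemma nl_M: "p dvd n \<Longrightarrow> nl n \<in> M" using res by blast

lemma nl_unit: "\<not> p dvd n \<Longrightarrow> v (nl n) = 0" using res unit_of[of "nl n"] by simp

lemma vp: "\<exists>\<pi>. v (nl p) = Fin \<pi> \<and> 0 < \<pi>"
proof -
  have "nl p \<noteq> \<zero>" using char0 p2 by simp
  then obtain a where a: "v (nl p) = Fin a" using vFin[of "nl p"] by auto
  moreover have "nl p \<in> M" using nl_M by simp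
  ultimately show ?thesis by (auto simp: inM zero_extended_def)
qed

lemma KL: assumes x: "x \<in> A"
  shows "\<exists>w\<in>A. (\<one> \<oplus> x) [^] p = \<one> \<oplus> x [^] p \<oplus> nl p \<otimes> x \<otimes> (\<one> \<oplus> x \<otimes> w)"
proof -
  have xc: "x \<in> carrier L" using x by (simp add: AK)
  define q where "q = (\<lambda>k. (p choose k) div p)"
  have qd: "\<And>k. 0 < k \<Longrightarrow> k < p \<Longrightarrow> p choose k = p * q k"
    unfolding q_def using dvd_choose_prime[OF _ _ _ pprime] by auto
  have q1: "q 1 = 1" unfolding q_def using p2 by simp
  define b where "b = (\<lambda>k. nl (p choose k) \<otimes> x [^] k)"
  have bc: "\<And>k. b k \<in> carrier L" unfolding b_def using xc by simp
  obtain p1 where p1: "p = Suc p1" using p2 by (cases p) auto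
  obtain p2' where p2': "p1 = Suc p2'" using p2 p1 by (cases p1) auto
  have "(\<one> \<oplus> x) [^] p = rs L b (Suc p)" unfolding b_def using binomial[OF xc] .
  also have "\<dots> = rs L b p \<oplus> x [^] p" using xc by (simp add: b_def)
  also have "rs L b p = \<one> \<oplus> rs L (\<lambda>k. b (Suc k)) p1" using rs_shift[of b p1, OF bc] p1 by (simp add: b_def)
  also have "rs L (\<lambda>k. b (Suc k)) p1 = rs L (\<lambda>k. (nl p \<otimes> x) \<otimes> (nl (q (Suc k)) \<otimes> x [^] k)) p1"
  proof (rule rs_cong)
    fix k assume "k < p1"
    then have "p choose Suc k = p * q (Suc k)" using qd[of "Suc k"] p1 by simp
    then show "b (Suc k) = (nl p \<otimes> x) \<otimes> (nl (q (Suc k)) \<otimes> x [^] k)"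
      unfolding b_def using xc by (simp add: nl_mult m_ac)
  qed
  also have "\<dots> = (nl p \<otimes> x) \<otimes> rs L (\<lambda>k. nl (q (Suc k)) \<otimes> x [^] k) p1"
    using rs_mult[of "nl p \<otimes> x" "\<lambda>k. nl (q (Suc k)) \<otimes> x [^] k" p1] xc by simp
  also have "rs L (\<lambda>k. nl (q (Suc k)) \<otimes> x [^] k) p1 = \<one> \<oplus> rs L (\<lambda>k. nl (q (Suc (Suc k))) \<otimes> x [^] Suc k) p2'"
    using rs_shift[of "\<lambda>k. nl (q (Suc k)) \<otimes> x [^] k" p2'] xc p2' q1 by simp
  also have "rs L (\<lambda>k. nl (q (Suc (Suc k))) \<otimes> x [^] Suc k) p2' = x \<otimes> rs L (\<lambda>k. nl (q (Suc (Suc k))) \<otimes> x [^] k) p2'"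
    using rs_mult[of x "\<lambda>k. nl (q (Suc (Suc k))) \<otimes> x [^] k" p2'] xc
    by (simp add: m_ac)
  finally have E: "(\<one> \<oplus> x) [^] p = \<one> \<oplus> x [^] p \<oplus> nl p \<otimes> x \<otimes> (\<one> \<oplus> x \<otimes> rs L (\<lambda>k. nl (q (Suc (Suc k))) \<otimes> x [^] k) p2')"
    using xc by (simp add: a_ac)
  have "rs L (\<lambda>k. nl (q (Suc (Suc k))) \<otimes> x [^] k) p2' \<in> A"
    by (rule rs_in) (simp_all add: A_add A_mult A_pow x)
  then show ?thesis using E by blast
qed

end


context cring begin
lemma G1: "P \<in> carrier R \<Longrightarrow> n \<in> carrier R \<Longrightarrow> E \<in> carrier R \<Longrightarrow>
  (\<one> \<oplus> P \<oplus> E) \<ominus> (\<one> \<oplus> n) = (P \<ominus> n) \<oplus> E" by algebra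
lemma G2: "u \<in> carrier R \<Longrightarrow> N \<in> carrier R \<Longrightarrow> I \<in> carrier R \<Longrightarrow> Q \<in> carrier R \<Longrightarrow> Z \<in> carrier R \<Longrightarrow>
  u \<ominus> Q \<otimes> Z = (N \<otimes> I \<oplus> \<one>) \<otimes> u \<ominus> N \<otimes> (I \<otimes> u \<oplus> Z) \<ominus> (Q \<ominus> N) \<otimes> Z" by algebra
lemma G3: "c \<in> carrier R \<Longrightarrow> N \<in> carrier R \<Longrightarrow> I \<in> carrier R \<Longrightarrow> Q \<in> carrier R \<Longrightarrow> Z \<in> carrier R \<Longrightarrow> z \<in> carrier R \<Longrightarrow>
  c \<ominus> (Q \<otimes> Z \<ominus> N \<otimes> z) = (N \<otimes> I \<oplus> \<one>) \<otimes> c \<ominus> N \<otimes> (I \<otimes> c \<oplus> Z \<ominus> z) \<ominus> (Q \<ominus> N) \<otimes> Z" by algebra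
lemma G4: "N \<in> carrier R \<Longrightarrow> x \<in> carrier R \<Longrightarrow> S \<in> carrier R \<Longrightarrow> w \<in> carrier R \<Longrightarrow>
  (\<one> \<oplus> N \<otimes> x \<oplus> S \<otimes> w) \<ominus> \<one> = N \<otimes> x \<oplus> S \<otimes> w" by algebra
lemma G5: "y \<in> carrier R \<Longrightarrow> \<one> \<oplus> (y \<ominus> \<one>) = y" by algebra
end

lemma inv_mod_nat: assumes pp: "Factorial_Ring.prime (p::nat)" and "\<not> p dvd i" shows "\<exists>a k. a * i + 1 = p * k"
proof -
  have i0: "i \<noteq> 0" proof assume "i = 0" then show False using assms(2) by simp qed
  have "coprime p i" using prime_imp_coprime[OF pp assms(2)] .
  then have g: "gcd i p = 1" by (metis coprime_iff_gcd_eq_1 gcd.commute)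
  obtain x y where xy: "i * x = p * y + 1" using bezout_nat[OF i0, of p] g by auto
  obtain q where q: "p = Suc q" using pp prime_ge_1_nat by (cases p) auto
  have "(x * q) * i + 1 = p * (q * y + 1)"
  proof -
    have "(x * q) * i + 1 = q * (i * x) + 1" by (simp add: algebra_simps)
    also have "\<dots> = q * (p * y + 1) + 1" using xy by simp
    also have "\<dots> = p * (q * y + 1)" unfolding q by (simp add: algebra_simps)
    finally show ?thesis .
  qed
  then show ?thesis by blast
qed

context vfp begin

lemma frob: "nl a [^] p \<ominus> nl a \<in> M"
proof (induction a)
  case 0
  have "(\<zero>::'a) [^] p = \<zero>" using p2 by (simp add: nat_pow_zero)
  then show ?case by (simp add: M_minus)
next
  case (Suc a)
  obtain w where w: "w \<in> A" "(\<one> \<oplus> nl a) [^] p = \<one> \<oplus> nl a [^] p \<oplus> nl p \<otimes> nl a \<otimes> (\<one> \<oplus> nl a \<otimes> w)"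
    using KL[of "nl a"] by auto
  have wc: "w \<in> carrier L" using w by (simp add: AK)
  have E: "nl p \<otimes> nl a \<otimes> (\<one> \<oplus> nl a \<otimes> w) \<in> M"
    using w by (intro M_mult' nl_M) (simp_all add: A_add A_mult)
  have nS: "nl (Suc a) = \<one> \<oplus> nl a" by (simp add: nl_Suc a_comm)
  have eq: "nl (Suc a) [^] p \<ominus> nl (Suc a) = (nl a [^] p \<ominus> nl a) \<oplus> nl p \<otimes> nl a \<otimes> (\<one> \<oplus> nl a \<otimes> w)"
    unfolding nS w(2) using wc by (intro G1) simp_all
  show ?case unfolding eq by (rule M_add[OF Suc.IH E])
qed

lemma inv_mod: assumes "\<not> p dvd i" shows "\<exists>a k. a * i + 1 = p * k"
  using inv_mod_nat[OF pprime assms] .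

lemma P4: assumes u: "u \<in> A" and z: "z \<in> A" and i: "\<not> p dvd i"
    and h: "nl i \<otimes> u \<oplus> z [^] p \<in> M"
  shows "\<exists>x\<in>A. u \<ominus> x [^] p \<in> M"
proof -
  obtain a k where ak: "a * i + 1 = p * k" using inv_mod[OF i] by blast
  have uc: "u \<in> carrier L" and zc: "z \<in> carrier L" using u z by (simp_all add: AK)
  have nk: "nl (p * k) = nl a \<otimes> nl i \<oplus> \<one>" using ak[symmetric] by (simp add: nl_add nl_mult)
  have xp: "(nl a \<otimes> z) [^] p = nl a [^] p \<otimes> z [^] p" using zc by (simp add: nat_pow_distrib)
  have eq: "u \<ominus> (nl a \<otimes> z) [^] p = nl (p * k) \<otimes> u \<ominus> nl a \<otimes> (nl i \<otimes> u \<oplus> z [^] p) \<ominus> (nl a [^] p \<ominus> nl a) \<otimes> z [^] p"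
    unfolding nk xp using uc zc by (intro G2) simp_all
  have t1: "nl (p * k) \<otimes> u \<in> M" by (rule M_mult'[OF nl_M u]) simp
  have t2: "nl a \<otimes> (nl i \<otimes> u \<oplus> z [^] p) \<in> M" by (rule M_mult[OF A_nl h])
  have t3: "(nl a [^] p \<ominus> nl a) \<otimes> z [^] p \<in> M" by (rule M_mult'[OF frob A_pow[OF z]])
  have "u \<ominus> (nl a \<otimes> z) [^] p \<in> M" unfolding eq using t1 t2 t3 by (intro M_minus)
  moreover have "nl a \<otimes> z \<in> A" using z by (simp add: A_mult)
  ultimately show ?thesis by blast
qed

lemma P5: assumes c: "c \<in> A" and z: "z \<in> A" and i: "\<not> p dvd i"
    and h: "nl i \<otimes> c \<oplus> z [^] p \<ominus> z \<in> M"
  shows "\<exists>x\<in>A. c \<ominus> (x [^] p \<ominus> x) \<in> M"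
proof -
  obtain a k where ak: "a * i + 1 = p * k" using inv_mod[OF i] by blast
  have cc: "c \<in> carrier L" and zc: "z \<in> carrier L" using c z by (simp_all add: AK)
  have nk: "nl (p * k) = nl a \<otimes> nl i \<oplus> \<one>" using ak[symmetric] by (simp add: nl_add nl_mult)
  have xp: "(nl a \<otimes> z) [^] p = nl a [^] p \<otimes> z [^] p" using zc by (simp add: nat_pow_distrib)
  have eq: "c \<ominus> ((nl a \<otimes> z) [^] p \<ominus> nl a \<otimes> z) = nl (p * k) \<otimes> c \<ominus> nl a \<otimes> (nl i \<otimes> c \<oplus> z [^] p \<ominus> z) \<ominus> (nl a [^] p \<ominus> nl a) \<otimes> z [^] p"
    unfolding nk xp using cc zc by (intro G3) simp_all
  have t1: "nl (p * k) \<otimes> c \<in> M" by (rule M_mult'[OF nl_M c]) simp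
  have t2: "nl a \<otimes> (nl i \<otimes> c \<oplus> z [^] p \<ominus> z) \<in> M" by (rule M_mult[OF A_nl h])
  have t3: "(nl a [^] p \<ominus> nl a) \<otimes> z [^] p \<in> M" by (rule M_mult'[OF frob A_pow[OF z]])
  have "c \<ominus> ((nl a \<otimes> z) [^] p \<ominus> nl a \<otimes> z) \<in> M" unfolding eq using t1 t2 t3 by (intro M_minus)
  moreover have "nl a \<otimes> z \<in> A" using z by (simp add: A_mult)
  ultimately show ?thesis by blast
qed

lemma pow_cong: assumes Y: "Y \<in> A" and h: "Y \<ominus> \<one> \<in> M" shows "Y [^] (n::nat) \<ominus> \<one> \<in> M"
proof -
  have Yc: "Y \<in> carrier L" using Y by (simp add: AK)
  obtain w where w: "w \<in> A" "(\<one> \<oplus> (Y \<ominus> \<one>)) [^] n = \<one> \<oplus> nl n \<otimes> (Y \<ominus> \<one>) \<oplus> (Y \<ominus> \<one>) [^] (2::nat) \<otimes> w"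
    using L1[of "Y \<ominus> \<one>" n] Y by (auto simp: A_minus)
  have e: "Y [^] n \<ominus> \<one> = nl n \<otimes> (Y \<ominus> \<one>) \<oplus> (Y \<ominus> \<one>) [^] (2::nat) \<otimes> w"
    using w(2) G5[OF Yc] G4[of "nl n" "Y \<ominus> \<one>" "(Y \<ominus> \<one>) [^] (2::nat)" w] Yc w(1) by (simp add: AK)
  have "nl n \<otimes> (Y \<ominus> \<one>) \<in> M" by (rule M_mult[OF A_nl h])
  moreover have "(Y \<ominus> \<one>) [^] (2::nat) \<otimes> w \<in> M" by (rule M_mult'[OF M_pow[OF h] w(1)]) simp
  ultimately show ?thesis unfolding e by (rule M_add)
qed

end


lemma nsm_Pinf: "0 < n \<Longrightarrow> nsm n (Pinf::'g::linordered_ab_group_add extended) = Pinf"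
proof (induction n)
  case 0 then show ?case by simp
next
  case (Suc n) then show ?case by (cases "n = 0") (simp_all add: zero_extended_def)
qed

context cring begin
lemma G6: "a \<in> carrier R \<Longrightarrow> b \<in> carrier R \<Longrightarrow> a \<otimes> b \<ominus> \<one> = (a \<ominus> \<one>) \<otimes> b \<oplus> (b \<ominus> \<one>)" by algebra
lemma G7: "Y \<in> carrier R \<Longrightarrow> E \<in> carrier R \<Longrightarrow> (\<one> \<oplus> Y \<oplus> E) \<ominus> \<one> = Y \<oplus> E" by algebra
lemma G8: "a \<in> carrier R \<Longrightarrow> b \<in> carrier R \<Longrightarrow> a = (a \<oplus> b) \<ominus> b" by algebra
lemma G9: "a \<in> carrier R \<Longrightarrow> (\<one> \<oplus> a) \<ominus> \<one> = a" by algebra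
end

context vfp begin

lemma R: assumes y: "y \<in> K" and nz: "v y \<noteq> 0" shows "v (y \<ominus> \<one>) \<le> 0"
proof (cases "v y < 0")
  case True
  have "v (y \<oplus> \<ominus> \<one>) = v y" using vstrict[of y "\<ominus> \<one>"] y True by (simp add: vneg1)
  then show ?thesis using True by (simp add: a_minus_def)
next
  case False
  then have "0 < v y" using nz by simp
  then have "v (y \<oplus> \<ominus> \<one>) = 0" using vstrict'[of y "\<ominus> \<one>"] y by (simp add: vneg1)
  then show ?thesis by (simp add: a_minus_def)
qed

lemma KLg: assumes g: "g \<in> A"
  shows "\<exists>w\<in>A. g [^] p \<ominus> \<one> = (g \<ominus> \<one>) [^] p \<oplus> nl p \<otimes> (g \<ominus> \<one>) \<otimes> (\<one> \<oplus> (g \<ominus> \<one>) \<otimes> w)"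
proof -
  have gc: "g \<in> carrier L" using g by (simp add: AK)
  have y: "g \<ominus> \<one> \<in> A" using g by (simp add: A_minus)
  obtain w where w: "w \<in> A" "(\<one> \<oplus> (g \<ominus> \<one>)) [^] p = \<one> \<oplus> (g \<ominus> \<one>) [^] p \<oplus> nl p \<otimes> (g \<ominus> \<one>) \<otimes> (\<one> \<oplus> (g \<ominus> \<one>) \<otimes> w)"
    using KL[OF y] by blast
  have "g [^] p \<ominus> \<one> = (g \<ominus> \<one>) [^] p \<oplus> nl p \<otimes> (g \<ominus> \<one>) \<otimes> (\<one> \<oplus> (g \<ominus> \<one>) \<otimes> w)"
    using w(2) G5[OF gc] G7[of "(g \<ominus> \<one>) [^] p" "nl p \<otimes> (g \<ominus> \<one>) \<otimes> (\<one> \<oplus> (g \<ominus> \<one>) \<otimes> w)"] gc w(1) by (simp add: AK)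
  then show ?thesis using w(1) by blast
qed

lemma L1g: assumes x: "x \<in> A"
  shows "\<exists>w\<in>A. (\<one> \<oplus> x) [^] (n::nat) \<ominus> \<one> = nl n \<otimes> x \<oplus> x [^] (2::nat) \<otimes> w"
proof -
  obtain w where w: "w \<in> A" "(\<one> \<oplus> x) [^] n = \<one> \<oplus> nl n \<otimes> x \<oplus> x [^] (2::nat) \<otimes> w" using L1[OF x] by blast
  have "(\<one> \<oplus> x) [^] n \<ominus> \<one> = nl n \<otimes> x \<oplus> x [^] (2::nat) \<otimes> w"
    using w G7[of "nl n \<otimes> x" "x [^] (2::nat) \<otimes> w"] x by (simp add: AK)
  then show ?thesis using w(1) by blast
qed

lemma Pre: assumes h: "h \<in> K" "h \<ominus> \<one> \<in> M" and g: "g \<in> K" "g \<noteq> \<zero>"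
    and X: "0 < v (h [^] (i::nat) \<otimes> g [^] p \<ominus> \<one>)"
  shows "v g = 0" "g \<ominus> \<one> \<in> M"
proof -
  have hc: "h \<in> carrier L" "g \<in> carrier L" using h g by simp_all
  have vh: "v h = 0" using one_plus_M[OF h(2)] G5[OF hc(1)] by simp
  have hA: "h \<in> A" using h vh by (simp add: inA)
  obtain \<gamma> where \<gamma>: "v g = Fin \<gamma>" using vFin g by blast
  have vX: "v (h [^] i \<otimes> g [^] p) = Fin (nsm p \<gamma>)"
    using vmult[of "h [^] i" "g [^] p"] vpow[of h i] vpow[of g p] h g vh \<gamma>
    by (simp add: nsm_zero nsm_Fin)
  show vg: "v g = 0"
  proof (rule ccontr)
    assume "v g \<noteq> 0"
    then have "\<gamma> \<noteq> 0" using \<gamma> by (simp add: zero_extended_def)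
    then have "nsm p \<gamma> \<noteq> 0" using nsm_eq0[of p \<gamma>] p2 by simp
    then have "v (h [^] i \<otimes> g [^] p) \<noteq> 0" using vX by (simp add: zero_extended_def)
    then have "v (h [^] i \<otimes> g [^] p \<ominus> \<one>) \<le> 0" using R h g by simp
    then show False using X by simp
  qed
  have gA: "g \<in> A" using g vg by (simp add: inA)
  have XM: "h [^] i \<otimes> g [^] p \<ominus> \<one> \<in> M" using X h g by (simp add: inM)
  have hM: "h [^] i \<ominus> \<one> \<in> M" using pow_cong[OF hA h(2)] .
  have "g [^] p \<ominus> \<one> = (h [^] i \<otimes> g [^] p \<ominus> \<one>) \<ominus> (h [^] i \<ominus> \<one>) \<otimes> g [^] p"
    using G6[of "h [^] i" "g [^] p"] G8[of "g [^] p \<ominus> \<one>" "(h [^] i \<ominus> \<one>) \<otimes> g [^] p"] hc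
    by (simp add: a_comm)
  then have gM: "g [^] p \<ominus> \<one> \<in> M" using XM M_mult'[OF hM A_pow[OF gA]] by (simp add: M_minus)
  obtain w where w: "w \<in> A" "g [^] p \<ominus> \<one> = (g \<ominus> \<one>) [^] p \<oplus> nl p \<otimes> (g \<ominus> \<one>) \<otimes> (\<one> \<oplus> (g \<ominus> \<one>) \<otimes> w)"
    using KLg[OF gA] by blast
  have EM: "nl p \<otimes> (g \<ominus> \<one>) \<otimes> (\<one> \<oplus> (g \<ominus> \<one>) \<otimes> w) \<in> M"
    using gA w(1) by (intro M_mult' nl_M) (simp_all add: A_minus A_add A_mult)
  have "(g \<ominus> \<one>) [^] p = (g [^] p \<ominus> \<one>) \<ominus> nl p \<otimes> (g \<ominus> \<one>) \<otimes> (\<one> \<oplus> (g \<ominus> \<one>) \<otimes> w)"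
    unfolding w(2) using hc w(1) by (intro G8) (simp_all add: AK)
  then have "(g \<ominus> \<one>) [^] p \<in> M" using gM EM by (simp add: M_minus)
  then show "g \<ominus> \<one> \<in> M" using M_root[of "g \<ominus> \<one>" p] gA p2 by (simp add: A_minus)
qed

end


context vfp begin

lemma vnl_i: "\<not> p dvd i \<Longrightarrow> x \<in> K \<Longrightarrow> v (nl i \<otimes> x) = v x"
  using vmult[of "nl i" x] nl_unit[of i] by simp

lemma case3: assumes t: "t \<in> M" and c: "c \<in> A" "v c = 0" and nd: "\<not> val_p_divides L K v p t"
  and ineq: "nsm (p - 1) (v t) < nsm p (v (nl p))" and g: "g \<in> K" "g \<noteq> \<zero>" and i: "\<not> p dvd i"
  and big: "v (c \<otimes> t) < v ((\<one> \<oplus> c \<otimes> t) [^] i \<otimes> g [^] p \<ominus> \<one>)"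
  shows False
proof -
  obtain \<pi> where \<pi>: "v (nl p) = Fin \<pi>" "0 < \<pi>" using vp by blast
  have p1: "0 < p - 1" using p2 by simp
  have tK: "t \<in> K" and cK: "c \<in> K" using t c by (simp_all add: MK AK)
  have tc: "t \<in> carrier L" "c \<in> carrier L" "g \<in> carrier L" using tK cK g by simp_all
  have t0: "t \<noteq> \<zero>"
  proof
    assume "t = \<zero>"
    then have "nsm (p - 1) (v t) = Pinf" using nsm_Pinf[OF p1] by simp
    then show False using ineq \<pi> by (simp add: nsm_Fin)
  qed
  obtain \<tau> where \<tau>: "v t = Fin \<tau>" using vFin[OF tK t0] by blast
  have \<tau>0: "0 < \<tau>" using t \<tau> by (simp add: inM zero_extended_def)
  have vct: "v (c \<otimes> t) = Fin \<tau>" using vmult[OF cK tK] c \<tau> by simp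
  define h where "h = \<one> \<oplus> c \<otimes> t"
  have ctM: "c \<otimes> t \<in> M" using M_mult[OF c(1) t] .
  have hK: "h \<in> K" unfolding h_def using tK cK by simp
  have h1: "h \<ominus> \<one> = c \<otimes> t" unfolding h_def using tc by (simp add: G9)
  have hM: "h \<ominus> \<one> \<in> M" using h1 ctM by simp
  have bigh: "Fin \<tau> < v (h [^] i \<otimes> g [^] p \<ominus> \<one>)" using big vct unfolding h_def by simp
  have "0 < Fin \<tau>" using \<tau>0 by (simp add: zero_extended_def)
  then have X0: "0 < v (h [^] i \<otimes> g [^] p \<ominus> \<one>)" using bigh by (rule less_trans)
  have vg: "v g = 0" and yM: "g \<ominus> \<one> \<in> M" using Pre[OF hK hM g X0] by auto
  have gA: "g \<in> A" using g vg by (simp add: inA)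
  obtain w1 where w1: "w1 \<in> A" "h [^] i \<ominus> \<one> = nl i \<otimes> (c \<otimes> t) \<oplus> (c \<otimes> t) [^] (2::nat) \<otimes> w1"
    using L1g[of "c \<otimes> t" i] ctM unfolding h_def by (auto simp: MA)
  have v1: "v (nl i \<otimes> (c \<otimes> t)) = Fin \<tau>" using vnl_i[OF i] vct cK tK by simp
  have v2: "Fin \<tau> < v ((c \<otimes> t) [^] (2::nat) \<otimes> w1)"
  proof -
    have "v ((c \<otimes> t) [^] (2::nat)) \<le> v ((c \<otimes> t) [^] (2::nat) \<otimes> w1)" using vge_mult w1 cK tK by simp
    moreover have "v ((c \<otimes> t) [^] (2::nat)) = Fin (\<tau> + \<tau>)" using vpow[of "c \<otimes> t" 2] vct cK tK
      by (simp add: nsm_Fin numeral_2_eq_2)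
    moreover have "\<tau> < \<tau> + \<tau>" using \<tau>0 by simp
    ultimately show ?thesis by (metis less_le_trans less_extended_simps(1))
  qed
  have vhi: "v (h [^] i \<ominus> \<one>) = Fin \<tau>"
    unfolding w1(2) using vstrict[of "nl i \<otimes> (c \<otimes> t)" "(c \<otimes> t) [^] (2::nat) \<otimes> w1"] v1 v2 cK tK w1(1) by (simp add: AK)
  have vgp: "v (g [^] p) = 0" using vpow[of g p] g vg by (simp add: nsm_zero)
  have vA: "v ((h [^] i \<ominus> \<one>) \<otimes> g [^] p) = Fin \<tau>" using vmult[of "h [^] i \<ominus> \<one>" "g [^] p"] vhi vgp hK g by simp
  have dec: "h [^] i \<otimes> g [^] p \<ominus> \<one> = (h [^] i \<ominus> \<one>) \<otimes> g [^] p \<oplus> (g [^] p \<ominus> \<one>)"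
    using G6[of "h [^] i" "g [^] p"] hK g by simp
  have vB: "v (g [^] p \<ominus> \<one>) = Fin \<tau>"
  proof (rule ccontr)
    assume ne: "v (g [^] p \<ominus> \<one>) \<noteq> Fin \<tau>"
    show False
    proof (cases "v (g [^] p \<ominus> \<one>) < Fin \<tau>")
      case True
      then have "v (h [^] i \<otimes> g [^] p \<ominus> \<one>) = v (g [^] p \<ominus> \<one>)"
        unfolding dec using vstrict'[of "(h [^] i \<ominus> \<one>) \<otimes> g [^] p" "g [^] p \<ominus> \<one>"] vA hK g by simp
      then show False using True bigh by simp
    next
      case False
      then have "Fin \<tau> < v (g [^] p \<ominus> \<one>)" using ne by simp
      then have "v (h [^] i \<otimes> g [^] p \<ominus> \<one>) = Fin \<tau>"
        unfolding dec using vstrict[of "(h [^] i \<ominus> \<one>) \<otimes> g [^] p" "g [^] p \<ominus> \<one>"] vA hK g by simp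
      then show False using bigh by simp
    qed
  qed
  define y where "y = g \<ominus> \<one>"
  have yK: "y \<in> K" unfolding y_def using g by simp
  obtain w2 where w2: "w2 \<in> A" "g [^] p \<ominus> \<one> = y [^] p \<oplus> nl p \<otimes> y \<otimes> (\<one> \<oplus> y \<otimes> w2)"
    using KLg[OF gA] unfolding y_def by blast
  have y0: "y \<noteq> \<zero>"
  proof
    assume "y = \<zero>"
    then have "g [^] p \<ominus> \<one> = \<zero>" using w2(2) p2 w2(1) by (simp add: nat_pow_zero AK)
    then show False using vB by simp
  qed
  obtain \<eta> where \<eta>: "v y = Fin \<eta>" using vFin[OF yK y0] by blast
  have \<eta>0: "0 < \<eta>" using yM \<eta> unfolding y_def by (simp add: inM zero_extended_def)
  have ywM: "y \<otimes> w2 \<in> M" using M_mult'[OF yM w2(1)] unfolding y_def .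
  have vu: "v (\<one> \<oplus> y \<otimes> w2) = 0" using one_plus_M[OF ywM] .
  have vE: "v (nl p \<otimes> y \<otimes> (\<one> \<oplus> y \<otimes> w2)) = Fin (\<pi> + \<eta>)"
    using vmult[of "nl p \<otimes> y" "\<one> \<oplus> y \<otimes> w2"] vmult[of "nl p" y] vu \<pi> \<eta> yK w2(1) by (simp add: AK)
  have vyp: "v (y [^] p) = Fin (nsm p \<eta>)" using vpow[OF yK] \<eta> by (simp add: nsm_Fin)
  have ps: "nsm p \<eta> = nsm (p - 1) \<eta> + \<eta>" using nsm_Suc'[of "p - 1" \<eta>] p2 by simp
  show False
  proof (cases "nsm p \<eta> < \<pi> + \<eta>")
    case True
    then have "v (g [^] p \<ominus> \<one>) = Fin (nsm p \<eta>)"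
      unfolding w2(2) using vstrict[of "y [^] p" "nl p \<otimes> y \<otimes> (\<one> \<oplus> y \<otimes> w2)"] vE vyp yK w2(1) by (simp add: AK)
    then have "v t = Fin (nsm p \<eta>)" using vB \<tau> by simp
    then have "val_p_divides L K v p t" unfolding val_p_divides_def using yK y0 \<eta> by blast
    then show False using nd by simp
  next
    case False
    then have le1: "\<pi> + \<eta> \<le> nsm p \<eta>" by simp
    have "min (v (y [^] p)) (v (nl p \<otimes> y \<otimes> (\<one> \<oplus> y \<otimes> w2))) \<le> v (g [^] p \<ominus> \<one>)"
      unfolding w2(2) using vadd[of "y [^] p" "nl p \<otimes> y \<otimes> (\<one> \<oplus> y \<otimes> w2)"] yK w2(1) by (simp add: AK)
    then have le2: "\<pi> + \<eta> \<le> \<tau>" using vE vyp vB le1 by (simp add: min_def split: if_splits)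
    have le3: "\<pi> \<le> nsm (p - 1) \<eta>" using le1 ps by simp
    have "nsm (p - 1) (\<pi> + \<eta>) \<le> nsm (p - 1) \<tau>" using nsm_mono[OF le2] .
    moreover have "nsm (p - 1) \<pi> + \<pi> \<le> nsm (p - 1) (\<pi> + \<eta>)"
      using le3 by (simp add: nsm_distrib)
    moreover have "nsm p \<pi> = nsm (p - 1) \<pi> + \<pi>" using nsm_Suc'[of "p - 1" \<pi>] p2 by simp
    ultimately have "nsm p \<pi> \<le> nsm (p - 1) \<tau>" by simp
    then show False using ineq \<tau> \<pi> by (simp add: nsm_Fin)
  qed
qed

end


context cring begin
lemma G10: "nI \<in> carrier R \<Longrightarrow> c \<in> carrier R \<Longrightarrow> S \<in> carrier R \<Longrightarrow> w \<in> carrier R \<Longrightarrow>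
  nI \<otimes> (c \<otimes> S) \<oplus> ((c \<otimes> S) \<otimes> (c \<otimes> S)) \<otimes> w = S \<otimes> (nI \<otimes> c \<oplus> S \<otimes> (c \<otimes> c \<otimes> w))" by algebra
lemma G11: "nI \<in> carrier R \<Longrightarrow> c \<in> carrier R \<Longrightarrow> S \<in> carrier R \<Longrightarrow> w1 \<in> carrier R \<Longrightarrow> Gp \<in> carrier R \<Longrightarrow>
  Zp \<in> carrier R \<Longrightarrow> r \<in> carrier R \<Longrightarrow> z \<in> carrier R \<Longrightarrow> y \<in> carrier R \<Longrightarrow> w2 \<in> carrier R \<Longrightarrow>
  nI \<otimes> c \<oplus> Zp \<oplus> r \<otimes> z = ((nI \<otimes> c \<oplus> S \<otimes> (c \<otimes> c \<otimes> w1)) \<otimes> Gp \<oplus> (Zp \<oplus> r \<otimes> z \<otimes> (\<one> \<oplus> y \<otimes> w2)))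
     \<ominus> (nI \<otimes> c \<otimes> (Gp \<ominus> \<one>) \<oplus> S \<otimes> (c \<otimes> c \<otimes> w1) \<otimes> Gp \<oplus> r \<otimes> z \<otimes> (y \<otimes> w2))" by algebra
lemma G12: "nP \<in> carrier R \<Longrightarrow> s \<in> carrier R \<Longrightarrow> z \<in> carrier R \<Longrightarrow> e \<in> carrier R \<Longrightarrow> S \<in> carrier R \<Longrightarrow> r \<in> carrier R \<Longrightarrow>
  nP \<otimes> s = S \<otimes> r \<Longrightarrow> nP \<otimes> (s \<otimes> z) \<otimes> e = S \<otimes> (r \<otimes> z \<otimes> e)"
  by (metis m_assoc m_closed)
lemma G13: "S \<in> carrier R \<Longrightarrow> B \<in> carrier R \<Longrightarrow> Gp \<in> carrier R \<Longrightarrow> Zp \<in> carrier R \<Longrightarrow> T \<in> carrier R \<Longrightarrow>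
  (S \<otimes> B) \<otimes> Gp \<oplus> (S \<otimes> Zp \<oplus> S \<otimes> T) = S \<otimes> (B \<otimes> Gp \<oplus> (Zp \<oplus> T))" by algebra
lemma pow2: "x \<in> carrier R \<Longrightarrow> x [^] (2::nat) = x \<otimes> x" by (simp add: numeral_2_eq_2)
end

context vfp begin

lemma caseG: assumes s: "s \<in> M" "s \<noteq> \<zero>" and r: "r \<in> A" and rs: "nl p \<otimes> s = s [^] p \<otimes> r"
  and c: "c \<in> A" and g: "g \<in> K" "g \<noteq> \<zero>" and i: "\<not> p dvd i"
  and big: "v (s [^] p) < v ((\<one> \<oplus> c \<otimes> s [^] p) [^] i \<otimes> g [^] p \<ominus> \<one>)"
  shows "\<exists>z\<in>A. nl i \<otimes> c \<oplus> z [^] p \<oplus> r \<otimes> z \<in> M"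
proof -
  have sK: "s \<in> K" and cK: "c \<in> K" and rK: "r \<in> K" using s c r by (simp_all add: MK AK)
  have sc: "s \<in> carrier L" "c \<in> carrier L" "r \<in> carrier L" "g \<in> carrier L" using sK cK rK g by simp_all
  obtain \<sigma> where \<sigma>: "v s = Fin \<sigma>" using vFin[OF sK s(2)] by blast
  have \<sigma>0: "0 < \<sigma>" using s \<sigma> by (simp add: inM zero_extended_def)
  define S where "S = s [^] p"
  have SK: "S \<in> K" and Sc: "S \<in> carrier L" unfolding S_def using sK by simp_all
  have SM: "S \<in> M" unfolding S_def using M_pow[OF s(1)] p2 by simp
  have vS: "v S = Fin (nsm p \<sigma>)" unfolding S_def using vpow[OF sK] \<sigma> by (simp add: nsm_Fin)
  define h where "h = \<one> \<oplus> c \<otimes> S"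
  have hK: "h \<in> K" unfolding h_def using cK SK by simp
  have cSM: "c \<otimes> S \<in> M" using M_mult[OF c SM] .
  have hM: "h \<ominus> \<one> \<in> M" unfolding h_def using cSM sc Sc by (simp add: G9)
  have bigh: "v S < v (h [^] i \<otimes> g [^] p \<ominus> \<one>)" using big unfolding h_def S_def .
  have "0 < v S" using SM by (simp add: inM)
  then have X0: "0 < v (h [^] i \<otimes> g [^] p \<ominus> \<one>)" using bigh by (rule less_trans)
  have vg: "v g = 0" and yM: "g \<ominus> \<one> \<in> M" using Pre[OF hK hM g X0] by auto
  have gA: "g \<in> A" using g vg by (simp add: inA)
  define Gp where "Gp = g [^] p"
  have GpK: "Gp \<in> K" and GpA: "Gp \<in> A" unfolding Gp_def using g gA by (simp_all add: A_pow)
  obtain w1 where w1: "w1 \<in> A" "h [^] i \<ominus> \<one> = nl i \<otimes> (c \<otimes> S) \<oplus> (c \<otimes> S) [^] (2::nat) \<otimes> w1"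
    using L1g[of "c \<otimes> S" i] cSM unfolding h_def by (auto simp: MA)
  have w1c: "w1 \<in> carrier L" using w1 by (simp add: AK)
  define B where "B = nl i \<otimes> c \<oplus> S \<otimes> (c \<otimes> c \<otimes> w1)"
  have BA: "B \<in> A" unfolding B_def using c w1 SM by (simp add: A_add A_mult MA)
  have Bc: "B \<in> carrier L" using BA by (simp add: AK)
  have hiB: "h [^] i \<ominus> \<one> = S \<otimes> B" unfolding w1(2) B_def
    using G10[of "nl i" c S w1] sc Sc w1c by (simp add: pow2)
  define y where "y = g \<ominus> \<one>"
  have yK: "y \<in> K" and yc: "y \<in> carrier L" unfolding y_def using g by simp_all
  have yM': "y \<in> M" using yM unfolding y_def .
  obtain w2 where w2: "w2 \<in> A" "Gp \<ominus> \<one> = y [^] p \<oplus> nl p \<otimes> y \<otimes> (\<one> \<oplus> y \<otimes> w2)"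
    using KLg[OF gA] unfolding y_def Gp_def by blast
  have w2c: "w2 \<in> carrier L" using w2 by (simp add: AK)
  have dec: "h [^] i \<otimes> Gp \<ominus> \<one> = (S \<otimes> B) \<otimes> Gp \<oplus> (Gp \<ominus> \<one>)"
    using G6[of "h [^] i" Gp] hK GpK hiB by simp
  have GpM: "Gp \<ominus> \<one> \<in> M" unfolding w2(2)
    using M_pow[OF yM'] p2 M_mult'[OF M_mult'[OF nl_M[of p] MA[OF yM']]] w2(1)
    by (intro M_add) (simp_all add: A_add A_mult MA[OF yM'])
  have bigh': "v S < v (h [^] i \<otimes> Gp \<ominus> \<one>)" using bigh unfolding Gp_def .
  show ?thesis
  proof (cases "y = \<zero> \<or> v s \<le> v y")
    case True
    define z where "z = y \<otimes> inv s"
    have invs: "inv s \<in> K" using Kinv[OF sK s(2)] .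
    have zK: "z \<in> K" and zc: "z \<in> carrier L" unfolding z_def using yK invs by simp_all
    have yz: "y = s \<otimes> z"
    proof -
      have "s \<otimes> z = y \<otimes> (s \<otimes> inv s)" unfolding z_def using sc yc invs by (simp add: m_ac)
      then show ?thesis using Kinv_r[OF sK s(2)] yc by simp
    qed
    have zA: "z \<in> A"
    proof (cases "y = \<zero>")
      case True then show ?thesis unfolding z_def using invs by simp
    next
      case False
      then have le: "v s \<le> v y" using True by simp
      have "v y = v s + v z" using vmult[OF sK zK] yz by simp
      then have "Fin \<sigma> + 0 \<le> Fin \<sigma> + v z" using le \<sigma> by simp
      then have "0 \<le> v z" by (simp only: Fin_add_le)
      then show ?thesis using zK by (simp add: inA)
    qed
    define e where "e = \<one> \<oplus> y \<otimes> w2"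
    have ec: "e \<in> carrier L" unfolding e_def using yc w2c by simp
    have ypow: "y [^] p = S \<otimes> z [^] p" unfolding yz S_def using sc zc by (simp add: nat_pow_distrib)
    have yE: "nl p \<otimes> y \<otimes> e = S \<otimes> (r \<otimes> z \<otimes> e)" unfolding yz
      using G12[of "nl p" s z e S r] sc zc ec Sc rs unfolding S_def by simp
    define Q where "Q = B \<otimes> Gp \<oplus> (z [^] p \<oplus> r \<otimes> z \<otimes> e)"
    have QK: "Q \<in> K" unfolding Q_def e_def using BA GpK zK rK yK w2(1) by (simp add: AK)
    have XQ: "h [^] i \<otimes> Gp \<ominus> \<one> = S \<otimes> Q" unfolding dec w2(2) Q_def
      using ypow yE[unfolded e_def] G13[of S B Gp "z [^] p" "r \<otimes> z \<otimes> e"] Sc Bc GpK zc sc ec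
      by (simp add: e_def)
    have "v S + 0 < v S + v Q" using bigh' XQ vmult[OF SK QK] by simp
    then have "0 < v Q" using vS by (simp only: Fin_add_less)
    then have QM: "Q \<in> M" using QK by (simp add: inM)
    have D: "nl i \<otimes> c \<otimes> (Gp \<ominus> \<one>) \<oplus> S \<otimes> (c \<otimes> c \<otimes> w1) \<otimes> Gp \<oplus> r \<otimes> z \<otimes> (y \<otimes> w2) \<in> M"
    proof (intro M_add)
      show "nl i \<otimes> c \<otimes> (Gp \<ominus> \<one>) \<in> M" using M_mult[OF _ GpM] c by (simp add: A_mult)
      show "S \<otimes> (c \<otimes> c \<otimes> w1) \<otimes> Gp \<in> M" using M_mult'[OF M_mult'[OF SM] GpA] c w1 by (simp add: A_mult)
      show "r \<otimes> z \<otimes> (y \<otimes> w2) \<in> M" using M_mult[OF _ M_mult'[OF yM' w2(1)]] r zA by (simp add: A_mult)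
    qed
    have "nl i \<otimes> c \<oplus> z [^] p \<oplus> r \<otimes> z \<in> M"
      using G11[of "nl i" c S w1 Gp "z [^] p" r z y w2] sc Sc w1c GpK zc yc w2c QM D
      unfolding Q_def B_def e_def by (simp add: M_minus)
    then show ?thesis using zA by blast
  next
    case False
    then have y0: "y \<noteq> \<zero>" and lt: "v y < v s" by auto
    obtain \<eta> where \<eta>: "v y = Fin \<eta>" using vFin[OF yK y0] by blast
    have \<eta>\<sigma>: "\<eta> < \<sigma>" using lt \<eta> \<sigma> by simp
    obtain \<pi> where \<pi>: "v (nl p) = Fin \<pi>" "0 < \<pi>" using vp by blast
    have np0: "nl p \<noteq> \<zero>" using char0 p2 by simp
    have "nl p \<otimes> s \<noteq> \<zero>" using np0 s(2) sc by (simp add: integral_iff)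
    then have r0: "r \<noteq> \<zero>" using rs Sc unfolding S_def by auto
    obtain \<rho> where \<rho>: "v r = Fin \<rho>" using vFin[OF rK r0] by blast
    have \<rho>0: "0 \<le> \<rho>" using r \<rho> by (simp add: inA zero_extended_def)
    have "v (nl p \<otimes> s) = v (s [^] p \<otimes> r)" using rs by simp
    then have "Fin (\<pi> + \<sigma>) = Fin (nsm p \<sigma> + \<rho>)" using vmult[of "nl p" s] vmult[of "s [^] p" r] vpow[OF sK] \<pi> \<sigma> \<rho> sK rK
      by (simp add: nsm_Fin)
    then have e1: "\<pi> + \<sigma> = nsm p \<sigma> + \<rho>" by simp
    have ps: "\<And>x. nsm p x = nsm (p - 1) x + x" using nsm_Suc' p2 by (metis Suc_diff_1 less_le_trans pos2)
    have "\<pi> = nsm (p - 1) \<sigma> + \<rho>" using e1 ps[of \<sigma>] by (simp add: algebra_simps)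
    then have "nsm (p - 1) \<sigma> \<le> \<pi>" using \<rho>0 by simp
    moreover have "nsm (p - 1) \<eta> < nsm (p - 1) \<sigma>" using nsm_strict_mono[OF \<eta>\<sigma>] p2 by simp
    ultimately have lt2: "nsm p \<eta> < \<pi> + \<eta>" using ps[of \<eta>] by simp
    have ywM: "y \<otimes> w2 \<in> M" using M_mult'[OF yM' w2(1)] .
    have vu: "v (\<one> \<oplus> y \<otimes> w2) = 0" using one_plus_M[OF ywM] .
    have vE: "v (nl p \<otimes> y \<otimes> (\<one> \<oplus> y \<otimes> w2)) = Fin (\<pi> + \<eta>)"
      using vmult[of "nl p \<otimes> y" "\<one> \<oplus> y \<otimes> w2"] vmult[of "nl p" y] vu \<pi> \<eta> yK w2(1) by (simp add: AK)
    have vyp: "v (y [^] p) = Fin (nsm p \<eta>)" using vpow[OF yK] \<eta> by (simp add: nsm_Fin)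
    have vG: "v (Gp \<ominus> \<one>) = Fin (nsm p \<eta>)"
      unfolding w2(2) using vstrict[of "y [^] p" "nl p \<otimes> y \<otimes> (\<one> \<oplus> y \<otimes> w2)"] vE vyp lt2 yK w2(1) by (simp add: AK)
    have "v S \<le> v (S \<otimes> (B \<otimes> Gp))" using vge_mult[OF SK] BA GpA by (simp add: A_mult)
    then have vSB: "v S \<le> v ((S \<otimes> B) \<otimes> Gp)" using Sc Bc GpK by (simp add: m_assoc)
    have "nsm p \<eta> < nsm p \<sigma>" using nsm_strict_mono[OF \<eta>\<sigma>] p2 by simp
    then have l3: "v (Gp \<ominus> \<one>) < v S" using vG vS by simp
    then have "v (h [^] i \<otimes> Gp \<ominus> \<one>) = v (Gp \<ominus> \<one>)" unfolding dec
      using vstrict'[of "(S \<otimes> B) \<otimes> Gp" "Gp \<ominus> \<one>"] vSB SK BA GpK by (simp add: AK)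
    then show ?thesis using l3 bigh' by simp
  qed
qed

end


context cring begin
lemma G14: assumes "a \<in> carrier R" "b \<in> carrier R" "e \<in> carrier R" "ie \<in> carrier R" "e \<otimes> ie = \<one>" "a \<oplus> b \<otimes> e = \<zero>"
  shows "b = a \<otimes> (\<ominus> ie)"
proof -
  have "b \<otimes> e = \<ominus> a" using assms by (metis a_comm add.inv_closed add.m_closed minus_equality m_closed)
  then have "b \<otimes> e \<otimes> ie = \<ominus> a \<otimes> ie" by simp
  then show ?thesis using assms by (simp add: m_assoc r_minus l_minus)
qed
lemma G15: "e \<in> carrier R \<Longrightarrow> ie \<in> carrier R \<Longrightarrow> e \<otimes> ie = \<one> \<Longrightarrow> \<ominus> ie \<oplus> \<one> = ie \<otimes> (e \<ominus> \<one>)"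
proof -
  assume a: "e \<in> carrier R" "ie \<in> carrier R" "e \<otimes> ie = \<one>"
  have "ie \<otimes> (e \<ominus> \<one>) = e \<otimes> ie \<ominus> ie" using a by algebra
  then show ?thesis using a by (simp add: a_minus_def a_comm)
qed
lemma G16: "h \<in> carrier R \<Longrightarrow> y \<in> carrier R \<Longrightarrow> h \<ominus> h \<otimes> y = \<ominus> (h \<otimes> (y \<ominus> \<one>))" by algebra
end

context vfp begin

lemma zeta: assumes z: "\<zeta> \<in> K" "\<zeta> [^] p = \<one>" "\<zeta> \<noteq> \<one>"
  shows "\<zeta> \<ominus> \<one> \<in> M" "\<zeta> \<ominus> \<one> \<noteq> \<zero>" "\<exists>r\<in>A. nl p \<otimes> (\<zeta> \<ominus> \<one>) = (\<zeta> \<ominus> \<one>) [^] p \<otimes> r \<and> r \<oplus> \<one> \<in> M"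
proof -
  have zc: "\<zeta> \<in> carrier L" using z by simp
  have z0: "\<zeta> \<noteq> \<zero>" using z p2 by (metis nat_pow_zero not_numeral_le_zero one_not_zero le_zero_eq)
  obtain a where a: "v \<zeta> = Fin a" using vFin[OF z(1) z0] by blast
  have "nsm p (v \<zeta>) = 0" using vpow[OF z(1), of p] z(2) by simp
  then have "a = 0" using a nsm_eq0[of p a] p2 by (simp add: nsm_Fin zero_extended_def)
  then have zA: "\<zeta> \<in> A" using a z by (simp add: inA zero_extended_def)
  define y where "y = \<zeta> \<ominus> \<one>"
  have yK: "y \<in> K" and yc: "y \<in> carrier L" and yA: "y \<in> A" unfolding y_def using z zA by (simp_all add: A_minus)
  obtain w where w: "w \<in> A" "\<zeta> [^] p \<ominus> \<one> = y [^] p \<oplus> nl p \<otimes> y \<otimes> (\<one> \<oplus> y \<otimes> w)"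
    using KLg[OF zA] unfolding y_def by blast
  have wc: "w \<in> carrier L" using w by (simp add: AK)
  define e where "e = \<one> \<oplus> y \<otimes> w"
  have ec: "e \<in> carrier L" and eK: "e \<in> K" and eA: "e \<in> A" unfolding e_def using yc wc yK w yA by (simp_all add: AK A_add A_mult)
  have sum0: "y [^] p \<oplus> nl p \<otimes> y \<otimes> e = \<zero>" using w(2) z(2) unfolding e_def by (simp add: a_minus_def r_neg)
  have EM: "nl p \<otimes> y \<otimes> e \<in> M" using M_mult'[OF M_mult'[OF nl_M[of p] yA] eA] by simp
  have "y [^] p = \<ominus> (nl p \<otimes> y \<otimes> e)" using sum0 yc ec by (metis minus_equality nat_pow_closed nl_closed m_closed a_comm)
  then have "y [^] p \<in> M" using EM by (simp add: M_neg)
  then have "y \<in> M" using M_root[OF yA _ \<open>y [^] p \<in> M\<close>] p2 by simp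
  then show yM: "\<zeta> \<ominus> \<one> \<in> M" unfolding y_def .
  show y0: "\<zeta> \<ominus> \<one> \<noteq> \<zero>"
  proof
    assume "\<zeta> \<ominus> \<one> = \<zero>"
    then have "\<zeta> = \<one>" using G5[OF zc] by simp
    then show False using z(3) by simp
  qed
  have ywM: "y \<otimes> w \<in> M" using M_mult'[OF yM[folded y_def] w(1)] .
  have ve: "v e = 0" unfolding e_def using one_plus_M[OF ywM] .
  have e0: "e \<noteq> \<zero>" using ve by (metis v0 Pinf_le zero_extended_def extended.distinct(1) order_refl)
  have ieK: "inv e \<in> K" using Kinv[OF eK e0] .
  have eie: "e \<otimes> inv e = \<one>" using Kinv_r[OF eK e0] .
  have vie: "v (inv e) = 0" using vinv[OF eK e0, of 0] ve by (simp add: zero_extended_def)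
  have ieA: "inv e \<in> A" using ieK vie by (simp add: inA)
  define r where "r = \<ominus> (inv e)"
  have rA: "r \<in> A" unfolding r_def using ieA by (simp add: A_neg)
  have "nl p \<otimes> y = y [^] p \<otimes> r" unfolding r_def
    using G14[of "y [^] p" "nl p \<otimes> y" e "inv e"] yc ec ieK eie sum0 by simp
  moreover have "r \<oplus> \<one> \<in> M"
  proof -
    have "r \<oplus> \<one> = inv e \<otimes> (e \<ominus> \<one>)" unfolding r_def using G15[OF ec _ eie] ieK by simp
    also have "e \<ominus> \<one> = y \<otimes> w" unfolding e_def using yc wc by (simp add: G9)
    finally show ?thesis using M_mult[OF ieA ywM] by simp
  qed
  ultimately show "\<exists>r\<in>A. nl p \<otimes> (\<zeta> \<ominus> \<one>) = (\<zeta> \<ominus> \<one>) [^] p \<otimes> r \<and> r \<oplus> \<one> \<in> M"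
    using rA unfolding y_def by blast
qed

lemma case1: assumes h: "h \<in> A" and nd: "\<not> val_p_divides L K v p h" and g: "g \<in> K" "g \<noteq> \<zero>"
  and i: "\<not> p dvd i" "1 \<le> i"
  shows "v (h [^] i \<otimes> g [^] p \<ominus> \<one>) \<le> v (h \<ominus> \<one>)"
proof -
  have hK: "h \<in> K" using h by (simp add: AK)
  have hc: "h \<in> carrier L" "g \<in> carrier L" using hK g by simp_all
  have vh0: "v h \<noteq> 0"
  proof
    assume "v h = 0"
    then have "val_p_divides L K v p h" unfolding val_p_divides_def
      using K1 v1 one_not_zero by (intro bexI[of _ \<one>] exI[of _ 0]) (simp_all add: nsm_zero zero_extended_def)
    then show False using nd by simp
  qed
  then have hpos: "0 < v h" using h by (auto simp: inA order_le_less)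
  have vh1: "v (h \<ominus> \<one>) = 0"
    using vstrict'[of h "\<ominus> \<one>"] hK hpos by (simp add: vneg1 a_minus_def)
  show ?thesis
  proof (cases "h = \<zero>")
    case True
    have "\<zero> [^] i = (\<zero>::'a)" using i(2) by (simp add: nat_pow_zero)
    then have "h [^] i \<otimes> g [^] p \<ominus> \<one> = \<ominus> \<one>" using True hc by (simp add: a_minus_def)
    then show ?thesis using vh1 vneg1 by simp
  next
    case False
    obtain \<eta> where \<eta>: "v h = Fin \<eta>" using vFin[OF hK False] by blast
    obtain \<gamma> where \<gamma>: "v g = Fin \<gamma>" using vFin[OF g] by blast
    have vX: "v (h [^] i \<otimes> g [^] p) = Fin (nsm i \<eta> + nsm p \<gamma>)"
      using vmult[of "h [^] i" "g [^] p"] vpow[OF hK] vpow[OF g(1)] \<eta> \<gamma> hK g by (simp add: nsm_Fin)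
    have "nsm i \<eta> + nsm p \<gamma> \<noteq> 0"
    proof
      assume s0: "nsm i \<eta> + nsm p \<gamma> = 0"
      obtain a k where ak: "a * i + 1 = p * k" using inv_mod[OF i(1)] by blast
      have "nsm (p * k) \<eta> = nsm (a * i + 1) \<eta>" by (simp only: ak)
      also have "\<dots> = nsm (a * i) \<eta> + nsm 1 \<eta>" by (rule nsm_add)
      also have "\<dots> = nsm a (nsm i \<eta>) + \<eta>" by (simp only: nsm_mult nsm_1)
      also have "nsm i \<eta> = - nsm p \<gamma>" using s0 by (simp add: eq_neg_iff_add_eq_0)
      also have "nsm a (- nsm p \<gamma>) = - nsm p (nsm a \<gamma>)"
      proof -
        have "nsm a (nsm p \<gamma>) = nsm (a * p) \<gamma>" by (simp only: nsm_mult)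
        also have "a * p = p * a" by (rule mult.commute)
        also have "nsm (p * a) \<gamma> = nsm p (nsm a \<gamma>)" by (simp only: nsm_mult)
        finally show ?thesis by (simp only: nsm_neg)
      qed
      finally have fin: "nsm (p * k) \<eta> = - nsm p (nsm a \<gamma>) + \<eta>" .
      have "nsm (p * k) \<eta> + nsm p (nsm a \<gamma>) = \<eta>" unfolding fin uminus_add_conv_diff by (rule diff_add_cancel)
      then have "\<eta> = nsm (p * k) \<eta> + nsm p (nsm a \<gamma>)" by simp
      then have "\<eta> = nsm p (nsm k \<eta>) + nsm p (nsm a \<gamma>)" by (simp only: nsm_mult)
      then have e: "\<eta> = nsm p (nsm k \<eta> + nsm a \<gamma>)" by (simp add: nsm_distrib)
      have gK: "h [^] k \<otimes> g [^] a \<in> K" using hK g by simp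
      have vg': "v (h [^] k \<otimes> g [^] a) = Fin (nsm k \<eta> + nsm a \<gamma>)"
        using vmult[of "h [^] k" "g [^] a"] vpow[OF hK] vpow[OF g(1)] \<eta> \<gamma> hK g by (simp add: nsm_Fin)
      then have "h [^] k \<otimes> g [^] a \<noteq> \<zero>" by auto
      then have "val_p_divides L K v p h" unfolding val_p_divides_def
        using gK vg' e \<eta> by (intro bexI[of _ "h [^] k \<otimes> g [^] a"] exI[of _ "nsm k \<eta> + nsm a \<gamma>"]) simp_all
      then show False using nd by simp
    qed
    then have "v (h [^] i \<otimes> g [^] p) \<noteq> 0" using vX by (simp add: zero_extended_def)
    then show ?thesis using R[of "h [^] i \<otimes> g [^] p"] hK g vh1 by simp
  qed
qed

lemma case2: assumes h: "h \<in> K" "v h = 0" and np: "\<not> (\<exists>x\<in>A. h \<ominus> x [^] p \<in> M)"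
  and g: "g \<in> K" "g \<noteq> \<zero>" and i: "\<not> p dvd i"
  shows "v (h [^] i \<otimes> g [^] p \<ominus> \<one>) \<le> v (h \<ominus> \<one>)"
proof -
  have hA: "h \<in> A" using h by (simp add: inA)
  have hc: "h \<in> carrier L" "g \<in> carrier L" using h g by simp_all
  have vh1: "v (h \<ominus> \<one>) = 0"
  proof -
    have "0 \<le> v (h \<ominus> \<one>)" using A_minus[OF hA A1] by (simp add: inA)
    moreover have "\<not> 0 < v (h \<ominus> \<one>)"
    proof
      assume "0 < v (h \<ominus> \<one>)"
      then have "h \<ominus> \<one> [^] p \<in> M" using h by (simp add: inM)
      then show False using np A1 by blast
    qed
    ultimately show ?thesis by simp
  qed
  obtain \<gamma> where \<gamma>: "v g = Fin \<gamma>" using vFin[OF g] by blast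
  define Xv where "Xv = h [^] i \<otimes> g [^] p"
  have XvK: "Xv \<in> K" unfolding Xv_def using h g by simp
  have vXv: "v Xv = Fin (nsm p \<gamma>)" unfolding Xv_def
    using vmult[of "h [^] i" "g [^] p"] vpow[OF h(1)] vpow[OF g(1)] h \<gamma> g by (simp add: nsm_Fin nsm_zero)
  show ?thesis
  proof (cases "v Xv = 0")
    case False
    then show ?thesis using R[OF XvK] vh1 unfolding Xv_def by simp
  next
    case True
    then have "\<gamma> = 0" using vXv nsm_eq0[of p \<gamma>] p2 by (simp add: zero_extended_def)
    then have gA: "g \<in> A" using g \<gamma> by (simp add: inA zero_extended_def)
    have XvA: "Xv \<in> A" using XvK True by (simp add: inA)
    show ?thesis
    proof (rule ccontr)
      assume "\<not> ?thesis"
      then have "0 < v (Xv \<ominus> \<one>)" using vh1 unfolding Xv_def by simp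
      then have XvM: "Xv \<ominus> \<one> \<in> M" using XvK by (simp add: inM)
      obtain a k where ak: "a * i + 1 = p * k" using inv_mod[OF i] by blast
      have Xva: "Xv [^] a \<ominus> \<one> \<in> M" using pow_cong[OF XvA XvM] .
      have kp: "k * p = Suc (i * a)" using ak by (simp add: algebra_simps)
      have e1: "(h [^] k \<otimes> g [^] a) [^] p = h [^] (k * p) \<otimes> g [^] (a * p)"
        using hc by (simp add: nat_pow_distrib nat_pow_pow)
      have e2: "h [^] (k * p) = h \<otimes> h [^] (i * a)" unfolding kp using hc by (simp only: nat_pow_Suc2)
      have e3: "Xv [^] a = h [^] (i * a) \<otimes> g [^] (p * a)" unfolding Xv_def
        using hc by (simp add: nat_pow_distrib nat_pow_pow)
      have e4: "g [^] (a * p) = g [^] (p * a)" by (simp only: mult.commute)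
      have "(h [^] k \<otimes> g [^] a) [^] p = h \<otimes> Xv [^] a"
        unfolding e1 e2 e3 e4 using hc by (simp add: m_assoc)
      then have eq: "(h [^] k \<otimes> g [^] a) [^] p = h \<otimes> Xv [^] a" .
      have "h \<ominus> (h [^] k \<otimes> g [^] a) [^] p = \<ominus> (h \<otimes> (Xv [^] a \<ominus> \<one>))"
        unfolding eq using G16[of h "Xv [^] a"] hc XvK by simp
      then have "h \<ominus> (h [^] k \<otimes> g [^] a) [^] p \<in> M" using M_neg[OF M_mult[OF hA Xva]] by simp
      moreover have "h [^] k \<otimes> g [^] a \<in> A" using hA gA by (simp add: A_mult A_pow)
      ultimately show False using np by blast
    qed
  qed
qed

end


context cring begin
lemma G17: "a \<in> carrier R \<Longrightarrow> Zp \<in> carrier R \<Longrightarrow> r \<in> carrier R \<Longrightarrow> z \<in> carrier R \<Longrightarrow>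
  a \<oplus> Zp \<ominus> z = (a \<oplus> Zp \<oplus> r \<otimes> z) \<ominus> (r \<oplus> \<one>) \<otimes> z" by algebra
lemma G18: "a \<in> carrier R \<Longrightarrow> b \<in> carrier R \<Longrightarrow> a = (a \<oplus> b) \<ominus> b" by algebra
end

context vfp begin

lemma case4: assumes u: "u \<in> val_units K v" and s: "s \<in> M"
  and np: "\<not> (\<exists>x \<in> A. u \<ominus> x [^] p \<in> M)"
  and ineq: "nsm (p - 1) (v s) < v (nl p)"
  and g: "g \<in> K" "g \<noteq> \<zero>" and i: "\<not> p dvd i"
  shows "v ((\<one> \<oplus> u \<otimes> s [^] p) [^] i \<otimes> g [^] p \<ominus> \<one>) \<le> v ((\<one> \<oplus> u \<otimes> s [^] p) \<ominus> \<one>)"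
proof (rule ccontr)
  assume "\<not> ?thesis"
  then have big0: "v ((\<one> \<oplus> u \<otimes> s [^] p) \<ominus> \<one>) < v ((\<one> \<oplus> u \<otimes> s [^] p) [^] i \<otimes> g [^] p \<ominus> \<one>)" by simp
  have uK: "u \<in> K" and vu: "v u = 0" using u by (simp_all add: val_units_def)
  have uA: "u \<in> A" using uK vu by (simp add: inA)
  have sK: "s \<in> K" using s by (simp add: MK)
  have p1: "0 < p - 1" using p2 by simp
  obtain \<pi> where \<pi>: "v (nl p) = Fin \<pi>" "0 < \<pi>" using vp by blast
  have s0: "s \<noteq> \<zero>"
  proof
    assume "s = \<zero>"
    then have "nsm (p - 1) (v s) = Pinf" using nsm_Pinf[OF p1] by simp
    then show False using ineq by simp
  qed
  obtain \<sigma> where \<sigma>: "v s = Fin \<sigma>" using vFin[OF sK s0] by blast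
  have ineq': "nsm (p - 1) \<sigma> < \<pi>" using ineq \<sigma> \<pi> by (simp add: nsm_Fin)
  have SK: "s [^] p \<in> K" using sK by simp
  have vS: "v (s [^] p) = Fin (nsm p \<sigma>)" using vpow[OF sK] \<sigma> by (simp add: nsm_Fin)
  have S0: "s [^] p \<noteq> \<zero>" using vS by auto
  define r where "r = nl p \<otimes> s \<otimes> inv (s [^] p)"
  have iK: "inv (s [^] p) \<in> K" using Kinv[OF SK S0] .
  have rK: "r \<in> K" unfolding r_def using sK iK by simp
  have vi: "v (inv (s [^] p)) = Fin (- nsm p \<sigma>)" using vinv[OF SK S0 vS] .
  have ps: "nsm p \<sigma> = nsm (p - 1) \<sigma> + \<sigma>" using nsm_Suc'[of "p - 1" \<sigma>] p2 by simp
  have vr: "v r = Fin (\<pi> + \<sigma> - nsm p \<sigma>)" unfolding r_def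
    using vmult[of "nl p \<otimes> s" "inv (s [^] p)"] vmult[of "nl p" s] \<pi> \<sigma> vi sK iK by simp
  have "0 < \<pi> + \<sigma> - nsm p \<sigma>" using ineq' ps by (simp add: algebra_simps)
  then have rM: "r \<in> M" using rK vr by (simp add: inM zero_extended_def)
  have rs: "nl p \<otimes> s = s [^] p \<otimes> r"
  proof -
    have "s [^] p \<otimes> r = nl p \<otimes> s \<otimes> (s [^] p \<otimes> inv (s [^] p))" unfolding r_def using sK iK by (simp add: m_ac)
    then show ?thesis using Kinv_r[OF SK S0] sK by simp
  qed
  have "v ((\<one> \<oplus> u \<otimes> s [^] p) \<ominus> \<one>) = v (s [^] p)"
    using G9[of "u \<otimes> s [^] p"] vmult[of u "s [^] p"] uK sK vu by simp
  then have big: "v (s [^] p) < v ((\<one> \<oplus> u \<otimes> s [^] p) [^] i \<otimes> g [^] p \<ominus> \<one>)" using big0 by simp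
  obtain z where z: "z \<in> A" "nl i \<otimes> u \<oplus> z [^] p \<oplus> r \<otimes> z \<in> M"
    using caseG[OF s s0 MA[OF rM] rs uA g i big] by blast
  have zK: "z \<in> K" using z by (simp add: AK)
  have eq: "nl i \<otimes> u \<oplus> z [^] p = (nl i \<otimes> u \<oplus> z [^] p \<oplus> r \<otimes> z) \<ominus> r \<otimes> z"
    using G18[of "nl i \<otimes> u \<oplus> z [^] p" "r \<otimes> z"] uK zK rK by simp
  have "nl i \<otimes> u \<oplus> z [^] p \<in> M" by (subst eq) (rule M_minus[OF z(2) M_mult'[OF rM z(1)]])
  then show False using P4[OF uA z(1) i] np by blast
qed

lemma case5: assumes zt: "\<zeta> \<in> K" "\<zeta> [^] p = \<one>" "\<zeta> \<noteq> \<one>" and c: "c \<in> val_units K v"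
  and np: "\<not> (\<exists>x \<in> A. c \<ominus> (x [^] p \<ominus> x) \<in> M)"
  and g: "g \<in> K" "g \<noteq> \<zero>" and i: "\<not> p dvd i"
  shows "v ((\<one> \<oplus> c \<otimes> (\<zeta> \<ominus> \<one>) [^] p) [^] i \<otimes> g [^] p \<ominus> \<one>) \<le> v ((\<one> \<oplus> c \<otimes> (\<zeta> \<ominus> \<one>) [^] p) \<ominus> \<one>)"
proof (rule ccontr)
  assume "\<not> ?thesis"
  then have big0: "v ((\<one> \<oplus> c \<otimes> (\<zeta> \<ominus> \<one>) [^] p) \<ominus> \<one>) < v ((\<one> \<oplus> c \<otimes> (\<zeta> \<ominus> \<one>) [^] p) [^] i \<otimes> g [^] p \<ominus> \<one>)" by simp
  have cK: "c \<in> K" and vc: "v c = 0" using c by (simp_all add: val_units_def)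
  have cA: "c \<in> A" using cK vc by (simp add: inA)
  have yM: "\<zeta> \<ominus> \<one> \<in> M" and y0: "\<zeta> \<ominus> \<one> \<noteq> \<zero>" using zeta(1,2)[OF zt] by auto
  obtain r where r: "r \<in> A" "nl p \<otimes> (\<zeta> \<ominus> \<one>) = (\<zeta> \<ominus> \<one>) [^] p \<otimes> r" "r \<oplus> \<one> \<in> M"
    using zeta(3)[OF zt] by blast
  have yK: "\<zeta> \<ominus> \<one> \<in> K" using zt by simp
  have "v ((\<one> \<oplus> c \<otimes> (\<zeta> \<ominus> \<one>) [^] p) \<ominus> \<one>) = v ((\<zeta> \<ominus> \<one>) [^] p)"
    using G9[of "c \<otimes> (\<zeta> \<ominus> \<one>) [^] p"] vmult[of c "(\<zeta> \<ominus> \<one>) [^] p"] cK yK vc by simp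
  then have big: "v ((\<zeta> \<ominus> \<one>) [^] p) < v ((\<one> \<oplus> c \<otimes> (\<zeta> \<ominus> \<one>) [^] p) [^] i \<otimes> g [^] p \<ominus> \<one>)" using big0 by simp
  obtain z where z: "z \<in> A" "nl i \<otimes> c \<oplus> z [^] p \<oplus> r \<otimes> z \<in> M"
    using caseG[OF yM y0 r(1) r(2) cA g i big] by blast
  have zK: "z \<in> K" and rK: "r \<in> K" using z r by (simp_all add: AK)
  have "nl i \<otimes> c \<oplus> z [^] p \<ominus> z = (nl i \<otimes> c \<oplus> z [^] p \<oplus> r \<otimes> z) \<ominus> (r \<oplus> \<one>) \<otimes> z"
    using G17[of "nl i \<otimes> c" "z [^] p" r z] cK zK rK by simp
  then have "nl i \<otimes> c \<oplus> z [^] p \<ominus> z \<in> M" using z(2) M_mult'[OF r(3) z(1)] by (simp add: M_minus)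
  then show False using P5[OF cA z(1) i] np by blast
qed

lemma main:
  assumes zeta: "\<zeta> \<in> K" "primitive_root L p \<zeta>"
    and hA: "h \<in> A"
    and cases:
      "\<not> val_p_divides L K v p h
       \<or> (h \<in> val_units K v \<and> \<not> (\<exists>x \<in> A. h \<ominus> x [^] p \<in> M))
       \<or> (\<exists>c t. c \<in> val_units K v \<and> t \<in> M \<and>
            h = \<one> \<oplus> c \<otimes> t \<and>
            0 < v t \<and> nsm (p - 1) (v t) < nsm p (v (nl p)) \<and>
            \<not> val_p_divides L K v p t)
       \<or> (\<exists>u s. u \<in> val_units K v \<and> s \<in> M \<and>
            \<not> (\<exists>x \<in> A. u \<ominus> x [^] p \<in> M) \<and>
            h = \<one> \<oplus> u \<otimes> s [^] p \<and>
            0 < v s \<and> nsm (p - 1) (v s) < v (nl p))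
       \<or> (\<exists>c. c \<in> val_units K v \<and>
            \<not> (\<exists>x \<in> A. c \<ominus> (x [^] p \<ominus> x) \<in> M) \<and>
            h = \<one> \<oplus> c \<otimes> (\<zeta> \<ominus> \<one>) [^] p)"
  shows "is_best L K v p h"
proof -
  have hK: "h \<in> K" using hA by (simp add: AK)
  have hc: "h \<in> carrier L" using hK by simp
  have bound: "\<And>g i. g \<in> K - {\<zero>} \<Longrightarrow> 1 \<le> i \<Longrightarrow> i \<le> p - 1 \<Longrightarrow>
      v (h [^] i \<otimes> g [^] p \<ominus> \<one>) \<le> v (h \<ominus> \<one>)"
  proof -
    fix g i assume g: "g \<in> K - {\<zero>}" and i1: "1 \<le> i" and i2: "i \<le> p - 1"
    have gK: "g \<in> K" "g \<noteq> \<zero>" using g by auto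
    have ndi: "\<not> p dvd i"
    proof
      assume "p dvd i"
      then have "p \<le> i" using i1 by (simp add: dvd_imp_le)
      then show False using i2 p2 by simp
    qed
    from cases show "v (h [^] i \<otimes> g [^] p \<ominus> \<one>) \<le> v (h \<ominus> \<one>)"
    proof (elim disjE conjE exE)
      assume "\<not> val_p_divides L K v p h"
      then show ?thesis using case1[OF hA _ gK ndi i1] by simp
    next
      assume u: "h \<in> val_units K v" and np: "\<not> (\<exists>x \<in> val_ring K v. h \<ominus> x [^] p \<in> val_ideal K v)"
      show ?thesis using case2[OF hK _ np gK ndi] u by (simp add: val_units_def)
    next
      fix c t
      assume c: "c \<in> val_units K v" and t: "t \<in> val_ideal K v" and hd: "h = \<one> \<oplus> c \<otimes> t"
        and "0 < v t" and ineq: "nsm (p - 1) (v t) < nsm p (v (nl p))" and nd: "\<not> val_p_divides L K v p t"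
      have cK: "c \<in> K" and vc: "v c = 0" using c by (simp_all add: val_units_def)
      have cA: "c \<in> A" using cK vc by (simp add: inA)
      have tK: "t \<in> K" using t by (simp add: MK)
      show ?thesis
      proof (rule ccontr)
        assume "\<not> ?thesis"
        moreover have "v (h \<ominus> \<one>) = v (c \<otimes> t)" unfolding hd using G9[of "c \<otimes> t"] cK tK by simp
        ultimately have "v (c \<otimes> t) < v ((\<one> \<oplus> c \<otimes> t) [^] i \<otimes> g [^] p \<ominus> \<one>)" unfolding hd by simp
        then show False using case3[OF t cA vc nd ineq gK ndi] by simp
      qed
    next
      fix u s
      assume u: "u \<in> val_units K v" and s: "s \<in> val_ideal K v"
        and np: "\<not> (\<exists>x \<in> val_ring K v. u \<ominus> x [^] p \<in> val_ideal K v)"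
        and hd: "h = \<one> \<oplus> u \<otimes> s [^] p" and "0 < v s" and ineq: "nsm (p - 1) (v s) < v (nl p)"
      show ?thesis unfolding hd using case4[OF u s np ineq gK ndi] .
    next
      fix c
      assume c: "c \<in> val_units K v"
        and np: "\<not> (\<exists>x \<in> val_ring K v. c \<ominus> (x [^] p \<ominus> x) \<in> val_ideal K v)"
        and hd: "h = \<one> \<oplus> c \<otimes> (\<zeta> \<ominus> \<one>) [^] p"
      have zp: "\<zeta> [^] p = \<one>" using zeta(2) unfolding primitive_root_def by simp
      have z1: "\<zeta> \<noteq> \<one>"
      proof
        assume "\<zeta> = \<one>"
        moreover have "\<zeta> [^] (1::nat) \<noteq> \<one>" using zeta(2) p2 unfolding primitive_root_def by auto
        ultimately show False using zeta(1) by simp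
      qed
      show ?thesis unfolding hd using case5[OF zeta(1) zp z1 c np gK ndi] .
    qed
  qed
  have mem: "v (h \<ominus> \<one>) \<in> best_gen_values L K v p h"
  proof -
    have "h [^] (1::nat) \<otimes> \<one> [^] p \<ominus> \<one> = h \<ominus> \<one>" using hc by simp
    moreover have "(1::nat) \<le> p - 1" using p2 by simp
    ultimately show ?thesis unfolding best_gen_values_def
      by (intro CollectI exI[of _ \<one>] exI[of _ "1::nat"]) (simp add: one_not_zero)
  qed
  show ?thesis unfolding is_best_def Let_def
  proof (intro conjI allI impI ballI)
    fix x assume "x \<in> best_gen_values L K v p h"
    then show "x \<le> v (h \<ominus> \<one>)" unfolding best_gen_values_def using bound by blast
  next
    fix b assume "\<forall>x\<in>best_gen_values L K v p h. x \<le> b"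
    then show "v (h \<ominus> \<one>) \<le> b" using mem by blast
  qed
qed


end

theorem corollary3p3p4:
  fixes L :: "('a, 'b) ring_scheme" and K :: "'a set"
    and v :: "'a \<Rightarrow> 'g::linordered_ab_group_add extended"
    and p :: nat and \<zeta> h :: 'a
  assumes p_prime: "Factorial_Ring.prime p"
    and L_field: "field L" and K_subfield: "subfield K L"
    and v_val: "valuation L K v"
    and hensel: "henselian L K v"
    and not_field: "\<not> subfield (val_ring K v) L"
    and char0: "\<forall>n::nat. 0 < n \<longrightarrow> add_pow L n \<one>\<^bsub>L\<^esub> \<noteq> \<zero>\<^bsub>L\<^esub>"
    and res_char: "\<forall>n::nat. add_pow L n \<one>\<^bsub>L\<^esub> \<in> val_ideal K v \<longleftrightarrow> p dvd n"
    and zeta: "\<zeta> \<in> K" "primitive_root L p \<zeta>"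
    and degree: "ring.dimension L p K (carrier L)"
    and hA: "h \<in> val_ring K v"
    and hgen: "generates L K p h"
    and cases:
      "\<not> val_p_divides L K v p h
       \<or> (h \<in> val_units K v \<and> \<not> (\<exists>x \<in> val_ring K v. h \<ominus>\<^bsub>L\<^esub> x [^]\<^bsub>L\<^esub> p \<in> val_ideal K v))
       \<or> (\<exists>c t. c \<in> val_units K v \<and> t \<in> val_ideal K v \<and>
            h = \<one>\<^bsub>L\<^esub> \<oplus>\<^bsub>L\<^esub> c \<otimes>\<^bsub>L\<^esub> t \<and>
            0 < v t \<and> nsm (p - 1) (v t) < nsm p (v (add_pow L p \<one>\<^bsub>L\<^esub>)) \<and>
            \<not> val_p_divides L K v p t)
       \<or> (\<exists>u s. u \<in> val_units K v \<and> s \<in> val_ideal K v \<and>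
            \<not> (\<exists>x \<in> val_ring K v. u \<ominus>\<^bsub>L\<^esub> x [^]\<^bsub>L\<^esub> p \<in> val_ideal K v) \<and>
            h = \<one>\<^bsub>L\<^esub> \<oplus>\<^bsub>L\<^esub> u \<otimes>\<^bsub>L\<^esub> s [^]\<^bsub>L\<^esub> p \<and>
            0 < v s \<and> nsm (p - 1) (v s) < v (add_pow L p \<one>\<^bsub>L\<^esub>))
       \<or> (\<exists>c. c \<in> val_units K v \<and>
            \<not> (\<exists>x \<in> val_ring K v.
                 c \<ominus>\<^bsub>L\<^esub> (x [^]\<^bsub>L\<^esub> p \<ominus>\<^bsub>L\<^esub> x) \<in> val_ideal K v) \<and>
            h = \<one>\<^bsub>L\<^esub> \<oplus>\<^bsub>L\<^esub> c \<otimes>\<^bsub>L\<^esub> (\<zeta> \<ominus>\<^bsub>L\<^esub> \<one>\<^bsub>L\<^esub>) [^]\<^bsub>L\<^esub> p)"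
  shows "is_best L K v p h"
proof -
  have loc: "vfp L K v p"
    unfolding vfp_def vfp_axioms_def vf_def vf_axioms_def
    using L_field K_subfield v_val p_prime char0 res_char by blast
  show ?thesis using vfp.main[OF loc zeta hA cases] .
qed


end
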